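(* Let $i\in I$ and $k\in\mathbb{Z}$. For any homogeneous element $u\in\widehat{\mathcal{A}}$, we have $$E'_{i,k}(u)=q_i^{(-1)^k\langle h_i,\mathrm{wt}(u)\rangle+1}uf_{i,k+1},\qquad E^\star_{i,k}(u)=q_i^{(-1)^k\langle h_i,\mathrm{wt}(u)\rangle+1}f_{i,k-1}u.$$
   Context: Let $\mathsf{C}=(c_{i,j})_{i,j\in I}$ be a finite-type Cartan matrix with simple roots $\alpha_i$, coroots $h_i$, $(\alpha_i,\alpha_j)=\mathsf{d}_ic_{i,j}$ ($\min\mathsf{d}_i=1$), $q_i=q^{\mathsf{d}_i}$, $\mathbf{k}=\mathbb{Q}(q^{1/2})$. $\widehat{\mathcal{A}}$ is the bosonic extension generated by $f_{i,p}$ ($i\in I,p\in\mathbb{Z}$) with quantum Serre relations among $\{f_{i,p}\}_{i\in I}$ for fixed $p$, $f_{i,m}f_{j,p}=q_i^{(-1)^{p-m+1}c_{i,j}}f_{j,p}f_{i,m}$ ($p>m+1$), $f_{i,p}f_{j,p+1}=q_i^{c_{i,j}}f_{j,p+1}f_{i,p}+\delta_{i,j}(1-q_i^2)$, weights $\mathrm{wt}(f_{i,p})=(-1)^{p+1}\alpha_i$. The bilinear form $(\!(\cdot,\cdot)\!)$: for homogeneous $x=x_b\cdots x_a$, $y=y_b\cdots y_a$ with $x_k,y_k$ weight vectors in the subalgebra generated by $f_{i,k}$ ($i\in I$), $(\!(x,y)\!)=\prod_k\kappa^{|\mathrm{wt}(x_k)|+|\mathrm{wt}(y_k)|}(x_k,y_k)_L$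 with Lusztig's form via $f_{i,k}\mapsto f_i$ ($(f_i,f_j)_L=\delta_{i,j}/(1-q_i^2)$), $\kappa_i=q_i^{1/2}(q_i^{-1}-q_i)$, $\kappa^{\sum n_i\alpha_i}=\prod\kappa_i^{n_i}$, $|\sum n_i\alpha_i|=\sum|n_i|\alpha_i$; it is symmetric and non-degenerate. $E'_{i,k},E^\star_{i,k}$ are the adjoint operators: $(\!(E'_{i,k}(u),v)\!)=(\!(u,f_{i,k}v)\!)$, $(\!(E^\star_{i,k}(u),v)\!)=(\!(u,vf_{i,k})\!)$. *)

theory Defs
  imports "HOL-Computational_Algebra.Fraction_Field" "HOL-Computational_Algebra.Polynomial" "HOL-Library.Function_Algebras"
begin

section \<open>Scalars: k = Q(q^(1/2)), with tt = q^(1/2)\<close>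

type_synonym K = "rat poly fract"

definition tt :: K where "tt = Fraction_Field.Fract [:0, 1:] 1"

text \<open>q_i^n = q^(d_i n) = tt^(2 d_i n), n an integer.\<close>
definition qi :: "('i \<Rightarrow> nat) \<Rightarrow> 'i \<Rightarrow> int \<Rightarrow> K" where
  "qi d i n = tt powi (2 * int (d i) * n)"

definition sgn_pow :: "int \<Rightarrow> int" where
  "sgn_pow n = (if even n then 1 else -1)"

definition finite_cartan :: "('i::finite \<Rightarrow> 'i \<Rightarrow> int) \<Rightarrow> ('i \<Rightarrow> nat) \<Rightarrow> bool" where
  "finite_cartan C d \<longleftrightarrow>
     (\<forall>i. C i i = 2) \<and> (\<forall>i j. i \<noteq> j \<longrightarrow> C i j \<le> 0) \<and>
     (\<forall>i. d i > 0) \<and> (\<exists>i. d i = 1) \<and>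
     (\<forall>i j. int (d i) * C i j = int (d j) * C j i) \<and>
     (\<forall>x :: 'i \<Rightarrow> real. x \<noteq> (\<lambda>_. 0) \<longrightarrow>
        (\<Sum>i\<in>UNIV. \<Sum>j\<in>UNIV. x i * real (d i) * real_of_int (C i j) * x j) > 0)"

section \<open>Free algebra on the letters f_{i,p}: finitely supported functions on words\<close>

definition supp_fin :: "('a list \<Rightarrow> K) \<Rightarrow> bool" where
  "supp_fin x \<longleftrightarrow> finite {w. x w \<noteq> 0}"

definition mono :: "'a list \<Rightarrow> 'a list \<Rightarrow> K" where
  "mono w = (\<lambda>w'. if w' = w then 1 else 0)"

definition gen :: "'a \<Rightarrow> 'a list \<Rightarrow> K" where
  "gen a = mono [a]"

definition fmult :: "('a list \<Rightarrow> K) \<Rightarrow> ('a list \<Rightarrow> K) \<Rightarrow> 'a list \<Rightarrow> K" where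
  "fmult x y = (\<lambda>w. \<Sum>n\<in>{0..length w}. x (take n w) * y (drop n w))"

definition smul :: "K \<Rightarrow> ('a list \<Rightarrow> K) \<Rightarrow> 'a list \<Rightarrow> K" where
  "smul c x = (\<lambda>w. c * x w)"

definition qint :: "K \<Rightarrow> nat \<Rightarrow> K" where
  "qint x m = (x ^ m - inverse x ^ m) / (x - inverse x)"

definition qfact :: "K \<Rightarrow> nat \<Rightarrow> K" where
  "qfact x m = (\<Prod>r\<in>{1..m}. qint x r)"

definition qbin :: "K \<Rightarrow> nat \<Rightarrow> nat \<Rightarrow> K" where
  "qbin x m s = qfact x m / (qfact x s * qfact x (m - s))"

definition serre :: "('i \<Rightarrow> 'i \<Rightarrow> int) \<Rightarrow> ('i \<Rightarrow> nat) \<Rightarrow> 'i \<Rightarrow> 'i \<Rightarrow> int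
                     \<Rightarrow> ('i \<times> int) list \<Rightarrow> K" where
  "serre C d i j p = (let n = nat (1 - C i j) in
     (\<lambda>w. \<Sum>s\<in>{0..n}. (-1) ^ s * qbin (qi d i 1) n s *
           mono (replicate (n - s) (i, p) @ [(j, p)] @ replicate s (i, p)) w))"

definition relators :: "('i \<Rightarrow> 'i \<Rightarrow> int) \<Rightarrow> ('i \<Rightarrow> nat) \<Rightarrow> (('i \<times> int) list \<Rightarrow> K) set" where
  "relators C d =
     {serre C d i j p | i j p. i \<noteq> j}
   \<union> {fmult (gen (i, m)) (gen (j, p))
        - smul (qi d i (sgn_pow (p - m + 1) * C i j)) (fmult (gen (j, p)) (gen (i, m)))
       | i j m p. p > m + 1}
   \<union> {fmult (gen (i, p)) (gen (j, p + 1))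
        - smul (qi d i (C i j)) (fmult (gen (j, p + 1)) (gen (i, p)))
        - (if i = j then smul (1 - qi d i 2) (mono []) else (\<lambda>_. 0))
       | i j p. True}"

text \<open>Two-sided ideal of the free algebra generated by the relators; the bosonic
  extension is the quotient of the finitely supported functions by it.\<close>
inductive_set relideal :: "('i \<Rightarrow> 'i \<Rightarrow> int) \<Rightarrow> ('i \<Rightarrow> nat) \<Rightarrow> (('i \<times> int) list \<Rightarrow> K) set"
  for C d where
  zero: "(\<lambda>_. 0) \<in> relideal C d"
| rel: "r \<in> relators C d \<Longrightarrow> fmult (mono u) (fmult r (mono v)) \<in> relideal C d"
| add: "x \<in> relideal C d \<Longrightarrow> y \<in> relideal C d \<Longrightarrow> x + y \<in> relideal C d"
| scal: "x \<in> relideal C d \<Longrightarrow> smul c x \<in> relideal C d"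

text \<open>Weights as coefficient vectors in the root lattice; wt f_{i,p} = (-1)^(p+1) alpha_i.\<close>
definition wtw :: "('i \<times> int) list \<Rightarrow> 'i \<Rightarrow> int" where
  "wtw w = (\<lambda>j. sum_list (map (\<lambda>(i, p). if i = j then sgn_pow (p + 1) else 0) w))"

definition homog :: "('i \<Rightarrow> int) \<Rightarrow> (('i \<times> int) list \<Rightarrow> K) \<Rightarrow> bool" where
  "homog \<beta> u \<longleftrightarrow> supp_fin u \<and> (\<forall>w. u w \<noteq> 0 \<longrightarrow> wtw w = \<beta>)"

definition hpair :: "('i::finite \<Rightarrow> 'i \<Rightarrow> int) \<Rightarrow> 'i \<Rightarrow> ('i \<Rightarrow> int) \<Rightarrow> int" where
  "hpair C i \<beta> = (\<Sum>j\<in>UNIV. C i j * \<beta> j)"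

text \<open>(1,1)_L = 1, (f_i u, v)_L = (1 - q_i^2)^(-1) (u, e_i' v)_L, where e_i' is the
  skew derivation with e_i'(f_j) = delta_ij, e_i'(xy) = e_i'(x) y + q_i^(<h_i,wt x>) x e_i'(y).\<close>
fun Lw :: "('i \<Rightarrow> 'i \<Rightarrow> int) \<Rightarrow> ('i \<Rightarrow> nat) \<Rightarrow> 'i list \<Rightarrow> 'i list \<Rightarrow> K" where
  "Lw C d [] v = (if v = [] then 1 else 0)"
| "Lw C d (i # u) v = inverse (1 - qi d i 2) *
     (\<Sum>s\<in>{..<length v}. if v ! s = i
        then qi d i (- (\<Sum>t<s. C i (v ! t))) * Lw C d u (take s v @ drop (Suc s) v)
        else 0)"

text \<open>(x_k, y_k)_L via f_{i,k} |-> f_i, extended bilinearly.\<close>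
definition LusF :: "('i \<Rightarrow> 'i \<Rightarrow> int) \<Rightarrow> ('i \<Rightarrow> nat) \<Rightarrow> (('i \<times> int) list \<Rightarrow> K)
                    \<Rightarrow> (('i \<times> int) list \<Rightarrow> K) \<Rightarrow> K" where
  "LusF C d x y = (\<Sum>w\<in>{w. x w \<noteq> 0}. \<Sum>w'\<in>{w'. y w' \<noteq> 0}.
                     x w * y w' * Lw C d (map fst w) (map fst w'))"

definition kappa_i :: "('i \<Rightarrow> nat) \<Rightarrow> 'i \<Rightarrow> K" where
  "kappa_i d i = tt ^ d i * (inverse (tt ^ (2 * d i)) - tt ^ (2 * d i))"

definition kappa :: "('i::finite \<Rightarrow> nat) \<Rightarrow> ('i \<Rightarrow> nat) \<Rightarrow> K" where
  "kappa d \<gamma> = (\<Prod>i\<in>UNIV. kappa_i d i ^ \<gamma> i)"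

text \<open>Weight vectors of the subalgebra generated by the f_{i,k} (i in I), k fixed, whose
  weight has absolute value gamma (i.e. weight (-1)^(k+1) gamma).\<close>
definition Ak_hom :: "int \<Rightarrow> ('i \<Rightarrow> nat) \<Rightarrow> (('i \<times> int) list \<Rightarrow> K) set" where
  "Ak_hom k \<gamma> = {x. supp_fin x \<and> (\<forall>w. x w \<noteq> 0 \<longrightarrow>
       (\<forall>l\<in>set w. snd l = k) \<and> (\<forall>j. length (filter (\<lambda>l. fst l = j) w) = \<gamma> j))}"

fun pd :: "(int \<Rightarrow> ('a list \<Rightarrow> K)) \<Rightarrow> int \<Rightarrow> nat \<Rightarrow> 'a list \<Rightarrow> K" where
  "pd X a 0 = X a"
| "pd X a (Suc n) = fmult (X (a + int (Suc n))) (pd X a n)"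

text \<open>B represents the form ((.,.)) on representatives in the free algebra.\<close>
definition bosonic_form :: "('i::finite \<Rightarrow> 'i \<Rightarrow> int) \<Rightarrow> ('i \<Rightarrow> nat)
     \<Rightarrow> ((('i \<times> int) list \<Rightarrow> K) \<Rightarrow> (('i \<times> int) list \<Rightarrow> K) \<Rightarrow> K) \<Rightarrow> bool" where
  "bosonic_form C d B \<longleftrightarrow>
     (\<forall>x y z. supp_fin x \<longrightarrow> supp_fin y \<longrightarrow> supp_fin z \<longrightarrow>
        B (x + y) z = B x z + B y z \<and> B z (x + y) = B z x + B z y) \<and>
     (\<forall>c x y. supp_fin x \<longrightarrow> supp_fin y \<longrightarrow>
        B (smul c x) y = c * B x y \<and> B x (smul c y) = c * B x y) \<and>
     (\<forall>x x' y. supp_fin x \<longrightarrow> supp_fin x' \<longrightarrow> supp_fin y \<longrightarrow> x - x' \<in> relideal C d \<longrightarrow>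
        B x y = B x' y \<and> B y x = B y x') \<and>
     (\<forall>x y. supp_fin x \<longrightarrow> supp_fin y \<longrightarrow> B x y = B y x) \<and>
     (\<forall>x. supp_fin x \<longrightarrow> (\<forall>y. supp_fin y \<longrightarrow> B x y = 0) \<longrightarrow> x \<in> relideal C d) \<and>
     (\<forall>a n X Y gx gy.
        (\<forall>k\<in>{a..a + int n}. X k \<in> Ak_hom k (gx k) \<and> Y k \<in> Ak_hom k (gy k)) \<longrightarrow>
        B (pd X a n) (pd Y a n) =
          (\<Prod>k\<in>{a..a + int n}. kappa d (\<lambda>j. gx k j + gy k j) * LusF C d (X k) (Y k)))"

text \<open>e = E'_{i,k}(u) and e = E*_{i,k}(u) (adjoint characterisation, unique mod the ideal
  by non-degeneracy).\<close>
definition is_Eprime where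
  "is_Eprime B i k u e \<longleftrightarrow> supp_fin e \<and>
     (\<forall>v. supp_fin v \<longrightarrow> B e v = B u (fmult (gen (i, k)) v))"

definition is_Estar where
  "is_Estar B i k u e \<longleftrightarrow> supp_fin e \<and>
     (\<forall>v. supp_fin v \<longrightarrow> B e v = B u (fmult v (gen (i, k))))"

end

theory Submission
  imports Defs
begin

lemma tt_nz: "tt \<noteq> 0"
  unfolding tt_def by (simp add: eq_fract Zero_fract_def)

lemma tt_pow: "tt ^ n = Fraction_Field.Fract ([:0, 1:] ^ n) 1"
  unfolding tt_def by (induction n) (simp_all add: One_fract_def)

lemma tt_pow_ne1: "n > 0 \<Longrightarrow> tt ^ n \<noteq> 1"
proof
  assume "n > 0" "tt ^ n = 1"
  then have "([:0, 1:] :: rat poly) ^ n = 1"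
    by (simp add: tt_pow One_fract_def eq_fract)
  then have "degree (([:0, 1:] :: rat poly) ^ n) = 0" by simp
  moreover have "degree (([:0, 1:] :: rat poly) ^ n) = n"
    using degree_linear_power[of "0::rat" n] by simp
  ultimately show False using \<open>n > 0\<close> by simp
qed


lemma qi_add: "qi d i (a + b) = qi d i a * qi d i b"
  unfolding qi_def using tt_nz by (simp add: distrib_left power_int_add)

lemma qi_0[simp]: "qi d i 0 = 1"
  unfolding qi_def by simp

lemma qi_nz: "qi d i n \<noteq> 0"
  unfolding qi_def using tt_nz by simp

lemma qi_minus: "qi d i (- a) = inverse (qi d i a)"
  unfolding qi_def using tt_nz by (simp add: power_int_minus)

lemma qi_diff: "qi d i (a - b) = qi d i a * inverse (qi d i b)"
  using qi_add[of d i a "-b"] qi_minus[of d i b] by simp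

lemma qi_sym: "int (d j) * C j i = int (d i) * C i j \<Longrightarrow> qi d j (s * C j i) = qi d i (s * C i j)"
  unfolding qi_def by (simp add: algebra_simps) (metis mult.assoc mult.left_commute)

lemma qi2_ne1: "d i > 0 \<Longrightarrow> qi d i 2 \<noteq> 1"
proof -
  assume "d i > 0"
  have "qi d i 2 = tt ^ (4 * d i)"
    unfolding qi_def by (simp add: power_int_def nat_mult_distrib)
  then show ?thesis using tt_pow_ne1[of "4 * d i"] \<open>d i > 0\<close> by simp
qed

lemma one_minus_q2_nz: "d i > 0 \<Longrightarrow> 1 - qi d i 2 \<noteq> 0"
  using qi2_ne1[of d i] by (metis right_minus_eq)

lemma kappa_aux: "(x::K) \<noteq> 0 \<Longrightarrow> (x * (inverse (x^2) - x^2))^2 = inverse (x^2) * (1 - x^2*x^2)^2"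
proof -
  assume x: "x \<noteq> 0"
  define y where "y = inverse (x^2)"
  have h: "x^2 * y = 1" using x unfolding y_def by simp
  have a: "1 - x^2*x^2 = x^2 * (y - x^2)" using h by (simp add: algebra_simps)
  have "inverse (x^2) * (1 - x^2*x^2)^2 = (x^2 * y) * (x^2 * (y - x^2)^2)"
    unfolding a y_def by (simp add: power_mult_distrib power2_eq_square)
  also have "\<dots> = x^2 * (y - x^2)^2" using h by simp
  also have "\<dots> = (x * (inverse (x^2) - x^2))^2" unfolding y_def by (simp add: power_mult_distrib)
  finally show ?thesis by simp
qed

lemma kappa_i_sq: "kappa_i d i ^ 2 = qi d i (-1) * (1 - qi d i 2) ^ 2"
proof -
  have nz: "tt ^ d i \<noteq> 0" using tt_nz by simp
  have e0: "tt ^ (2 * d i) = (tt ^ d i)^2"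
    by (simp add: power_mult[symmetric] mult.commute)
  have nn: "nat (2 * int (d i)) = 2 * d i" by simp
  have e1: "qi d i (-1) = inverse ((tt ^ d i)^2)"
    unfolding qi_def e0[symmetric] by (simp add: power_int_def power_inverse nn)
  have e2: "qi d i 2 = (tt ^ d i)^2 * (tt ^ d i)^2"
    unfolding qi_def e0[symmetric] by (simp add: power_int_def nat_mult_distrib power_add[symmetric])
  show ?thesis unfolding kappa_i_def e1 e2 e0 using kappa_aux[OF nz] by simp
qed

lemma kappa_i_nz: "d i > 0 \<Longrightarrow> kappa_i d i \<noteq> 0"
proof
  assume "d i > 0" "kappa_i d i = 0"
  then have "kappa_i d i ^ 2 = 0" by simp
  then show False using kappa_i_sq[of d i] one_minus_q2_nz[of d i] \<open>d i > 0\<close> qi_nz[of d i "-1"] by simp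
qed

lemma kappa_nz: "\<forall>j. d j > 0 \<Longrightarrow> kappa d g \<noteq> 0"
proof -
  assume a: "\<forall>j. d j > 0"
  have "\<forall>j\<in>UNIV. kappa_i d j ^ g j \<noteq> 0" using a by (simp add: kappa_i_nz)
  then show ?thesis unfolding kappa_def by (subst prod_zero_iff) auto
qed

lemma kappa_add1: "kappa d (\<lambda>j. g j + (if j = i then 1 else 0)) = kappa d g * kappa_i d i"
proof -
  have "kappa d (\<lambda>j. g j + (if j = i then 1 else 0)) =
        (\<Prod>j\<in>UNIV. kappa_i d j ^ g j * (if j = i then kappa_i d j else 1))"
    unfolding kappa_def by (intro prod.cong) (auto simp: power_add)
  also have "\<dots> = kappa d g * (\<Prod>j\<in>UNIV. (if j = i then kappa_i d j else 1))"
    unfolding kappa_def by (simp add: prod.distrib)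
  also have "(\<Prod>j\<in>UNIV. (if j = i then kappa_i d j else 1)) = kappa_i d i"
    by (simp add: prod.delta)
  finally show ?thesis .
qed

lemma kappa_zero[simp]: "kappa d (\<lambda>_. 0) = 1"
  unfolding kappa_def by simp

lemma mono_apply: "mono u w = (if w = u then 1 else 0)"
  by (simp add: mono_def)

lemma fmult_mono_left:
  "fmult (mono u) x = (\<lambda>w. if take (length u) w = u then x (drop (length u) w) else 0)"
proof
  fix w
  have "fmult (mono u) x w = (\<Sum>n\<in>{0..length w}. if n = length u then (if take (length u) w = u then x (drop (length u) w) else 0) else 0)"
    unfolding fmult_def
  proof (intro sum.cong refl)
    fix n assume n: "n \<in> {0..length w}"
    show "mono u (take n w) * x (drop n w) = (if n = length u then (if take (length u) w = u then x (drop (length u) w) else 0) else 0)"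
      using n by (auto simp: mono_apply)
  qed
  also have "\<dots> = (if take (length u) w = u then x (drop (length u) w) else 0)"
    by (auto simp: sum.delta' dest: sym[THEN arg_cong[where f=length]])
  finally show "fmult (mono u) x w = (if take (length u) w = u then x (drop (length u) w) else 0)" .
qed

lemma fmult_mono_right:
  "fmult x (mono v) = (\<lambda>w. if length v \<le> length w \<and> drop (length w - length v) w = v then x (take (length w - length v) w) else 0)"
proof
  fix w
  have "fmult x (mono v) w = (\<Sum>n\<in>{0..length w}. if n = length w - length v then (if length v \<le> length w \<and> drop (length w - length v) w = v then x (take (length w - length v) w) else 0) else 0)"
    unfolding fmult_def
  proof (intro sum.cong refl)
    fix n assume n: "n \<in> {0..length w}"
    show "x (take n w) * mono v (drop n w) = (if n = length w - length v then (if length v \<le> length w \<and> drop (length w - length v) w = v then x (take (length w - length v) w) else 0) else 0)"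
      using n by (auto simp: mono_apply)
  qed
  also have "\<dots> = (if length v \<le> length w \<and> drop (length w - length v) w = v then x (take (length w - length v) w) else 0)"
    by (auto simp: sum.delta')
  finally show "fmult x (mono v) w = (if length v \<le> length w \<and> drop (length w - length v) w = v then x (take (length w - length v) w) else 0)" .
qed

lemma fmult_mono_mono: "fmult (mono u) (mono v) = mono (u @ v)"
proof
  fix w
  show "fmult (mono u) (mono v) w = mono (u @ v) w"
    unfolding fmult_mono_left mono_apply
    by (metis append_eq_conv_conj)
qed

lemma fmult_Nil_left[simp]: "fmult (mono []) x = x"
  by (simp add: fmult_mono_left)

lemma fmult_Nil_right[simp]: "fmult x (mono []) = x"
  by (simp add: fmult_mono_right)

lemma fmult_add_left: "fmult (x + y) z = fmult x z + fmult y z"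
  unfolding fmult_def by (auto simp: distrib_right sum.distrib)

lemma fmult_add_right: "fmult z (x + y) = fmult z x + fmult z y"
  unfolding fmult_def by (auto simp: distrib_left sum.distrib)

lemma fmult_diff_left: "fmult (x - y) z = fmult x z - fmult y z"
  unfolding fmult_def by (auto simp: fun_diff_def left_diff_distrib sum_subtractf)

lemma fmult_diff_right: "fmult z (x - y) = fmult z x - fmult z y"
  unfolding fmult_def by (auto simp: fun_diff_def right_diff_distrib sum_subtractf)

lemma fmult_smul_left: "fmult (smul c x) z = smul c (fmult x z)"
  unfolding fmult_def smul_def by (auto simp: sum_distrib_left mult.assoc)

lemma fmult_smul_right: "fmult z (smul c x) = smul c (fmult z x)"
  unfolding fmult_def smul_def by (auto simp: sum_distrib_left mult.left_commute)

lemma fmult_zero_left[simp]: "fmult (\<lambda>_. 0) z = (\<lambda>_. 0)"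
  unfolding fmult_def by auto

lemma supp_fin_mono[simp]: "supp_fin (mono u)"
  unfolding supp_fin_def mono_def by (auto intro: finite_subset[of _ "{u}"])

lemma supp_fin_zero[simp]: "supp_fin (\<lambda>_. 0)"
  unfolding supp_fin_def by simp

lemma supp_fin_add[simp]: "supp_fin x \<Longrightarrow> supp_fin y \<Longrightarrow> supp_fin (x + y)"
  unfolding supp_fin_def
  by (rule finite_subset[of _ "{w. x w \<noteq> 0} \<union> {w. y w \<noteq> 0}"]) auto

lemma supp_fin_smul[simp]: "supp_fin x \<Longrightarrow> supp_fin (smul c x)"
  unfolding supp_fin_def smul_def
  by (rule finite_subset[of _ "{w. x w \<noteq> 0}"]) auto

lemma supp_fin_diff[simp]: "supp_fin x \<Longrightarrow> supp_fin y \<Longrightarrow> supp_fin (x - y)"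
  unfolding supp_fin_def
  by (rule finite_subset[of _ "{w. x w \<noteq> 0} \<union> {w. y w \<noteq> 0}"]) (auto simp: fun_diff_def)

lemma supp_fin_fmult[simp]: "supp_fin x \<Longrightarrow> supp_fin y \<Longrightarrow> supp_fin (fmult x y)"
  unfolding supp_fin_def
proof (rule finite_subset[of _ "(\<lambda>(a, b). a @ b) ` ({w. x w \<noteq> 0} \<times> {w. y w \<noteq> 0})"])
  show "{w. fmult x y w \<noteq> 0} \<subseteq> (\<lambda>(a, b). a @ b) ` ({w. x w \<noteq> 0} \<times> {w. y w \<noteq> 0})"
  proof
    fix w assume "w \<in> {w. fmult x y w \<noteq> 0}"
    then have "(\<Sum>n\<in>{0..length w}. x (take n w) * y (drop n w)) \<noteq> 0"
      unfolding fmult_def by simp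
    then have "\<exists>n\<in>{0..length w}. x (take n w) * y (drop n w) \<noteq> 0"
      by (meson sum.neutral)
    then obtain n where "x (take n w) * y (drop n w) \<noteq> 0" by blast
    then show "w \<in> (\<lambda>(a, b). a @ b) ` ({w. x w \<noteq> 0} \<times> {w. y w \<noteq> 0})"
      by (auto intro!: image_eqI[of _ _ "(take n w, drop n w)"])
  qed
qed auto

lemma supp_fin_gen[simp]: "supp_fin (gen a)"
  by (simp add: gen_def)

definition lin :: "(('a list \<Rightarrow> K) \<Rightarrow> K) \<Rightarrow> bool" where
  "lin \<Phi> \<longleftrightarrow> (\<forall>x y. supp_fin x \<longrightarrow> supp_fin y \<longrightarrow> \<Phi> (x + y) = \<Phi> x + \<Phi> y) \<and>
             (\<forall>c x. supp_fin x \<longrightarrow> \<Phi> (smul c x) = c * \<Phi> x)"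

definition RW :: "('i \<Rightarrow> 'i \<Rightarrow> int) \<Rightarrow> ('i \<Rightarrow> nat) \<Rightarrow> ((('i \<times> int) list \<Rightarrow> K) \<Rightarrow> K) \<Rightarrow> bool" where
  "RW C d \<Phi> \<longleftrightarrow> lin \<Phi> \<and>
    (\<forall>A R i j m p. p > m + 1 \<longrightarrow> \<Phi> (mono (A @ [(i,m),(j,p)] @ R)) =
        qi d i (sgn_pow (p - m + 1) * C i j) * \<Phi> (mono (A @ [(j,p),(i,m)] @ R))) \<and>
    (\<forall>A R i j p. \<Phi> (mono (A @ [(i,p),(j,p+1)] @ R)) =
        qi d i (C i j) * \<Phi> (mono (A @ [(j,p+1),(i,p)] @ R)) +
        (if i = j then (1 - qi d i 2) * \<Phi> (mono (A @ R)) else 0))"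

lemma lin_add: "lin \<Phi> \<Longrightarrow> supp_fin x \<Longrightarrow> supp_fin y \<Longrightarrow> \<Phi> (x + y) = \<Phi> x + \<Phi> y"
  unfolding lin_def by blast

lemma lin_smul: "lin \<Phi> \<Longrightarrow> supp_fin x \<Longrightarrow> \<Phi> (smul c x) = c * \<Phi> x"
  unfolding lin_def by blast

lemma lin_zero: "lin \<Phi> \<Longrightarrow> \<Phi> (\<lambda>_. 0) = 0"
proof -
  assume l: "lin \<Phi>"
  have "smul 0 (\<lambda>_. 0) = ((\<lambda>_. 0) :: 'a list \<Rightarrow> K)" by (simp add: smul_def)
  then show ?thesis using lin_smul[OF l, of "\<lambda>_. 0" 0] by simp
qed

lemma lin_expand_aux:
  assumes l: "lin \<Phi>" and fin: "finite S"
  shows "\<forall>y. {w. y w \<noteq> 0} = S \<longrightarrow> \<Phi> y = (\<Sum>w\<in>S. y w * \<Phi> (mono w))"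
  using fin
proof (induction S rule: finite_induct)
  case empty
  then show ?case using lin_zero[OF l] by (auto simp: fun_eq_iff)
next
  case (insert w0 S)
  show ?case
  proof (intro allI impI)
    fix y :: "'a list \<Rightarrow> K" assume y: "{w. y w \<noteq> 0} = insert w0 S"
    define y' where "y' = y(w0 := 0)"
    have s': "{w. y' w \<noteq> 0} = S" using y insert.hyps unfolding y'_def by auto
    have sf: "supp_fin y'" unfolding supp_fin_def s' using insert.hyps by simp
    have dec: "y = y' + smul (y w0) (mono w0)"
      by (auto simp: y'_def smul_def mono_def fun_eq_iff)
    have "\<Phi> y = \<Phi> y' + y w0 * \<Phi> (mono w0)"
      by (subst dec) (simp add: lin_add[OF l] lin_smul[OF l] sf)
    also have "\<Phi> y' = (\<Sum>w\<in>S. y' w * \<Phi> (mono w))" using insert.IH s' by blast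
    also have "\<dots> = (\<Sum>w\<in>S. y w * \<Phi> (mono w))"
      by (rule sum.cong) (use insert.hyps in \<open>auto simp: y'_def\<close>)
    finally show "\<Phi> y = (\<Sum>w\<in>insert w0 S. y w * \<Phi> (mono w))"
      using insert.hyps by (simp add: add.commute)
  qed
qed

lemma lin_expand: "lin \<Phi> \<Longrightarrow> supp_fin y \<Longrightarrow> \<Phi> y = (\<Sum>w\<in>{w. y w \<noteq> 0}. y w * \<Phi> (mono w))"
  using lin_expand_aux[of \<Phi> "{w. y w \<noteq> 0}"] unfolding supp_fin_def by blast

lemma RW_lin: "RW C d \<Phi> \<Longrightarrow> lin \<Phi>"
  unfolding RW_def by blast

lemma RW_R1: "RW C d \<Phi> \<Longrightarrow> p > m + 1 \<Longrightarrow> \<Phi> (mono (A @ [(i,m),(j,p)] @ R)) =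
        qi d i (sgn_pow (p - m + 1) * C i j) * \<Phi> (mono (A @ [(j,p),(i,m)] @ R))"
  unfolding RW_def by blast

lemma RW_R2: "RW C d \<Phi> \<Longrightarrow> \<Phi> (mono (A @ [(i,p),(j,p+1)] @ R)) =
        qi d i (C i j) * \<Phi> (mono (A @ [(j,p+1),(i,p)] @ R)) +
        (if i = j then (1 - qi d i 2) * \<Phi> (mono (A @ R)) else 0)"
  unfolding RW_def by blast

lemma RW_intro:
  assumes "lin \<Phi>"
    and "\<And>A R i j m p. p > m + 1 \<Longrightarrow> \<Phi> (mono (A @ [(i,m),(j,p)] @ R)) =
        qi d i (sgn_pow (p - m + 1) * C i j) * \<Phi> (mono (A @ [(j,p),(i,m)] @ R))"
    and "\<And>A R i j p. \<Phi> (mono (A @ [(i,p),(j,p+1)] @ R)) =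
        qi d i (C i j) * \<Phi> (mono (A @ [(j,p+1),(i,p)] @ R)) +
        (if i = j then (1 - qi d i 2) * \<Phi> (mono (A @ R)) else 0)"
  shows "RW C d \<Phi>"
  unfolding RW_def using assms by blast

lemma lin_scale: "lin \<Phi> \<Longrightarrow> lin (\<lambda>x. c * \<Phi> x)"
  unfolding lin_def by (simp add: algebra_simps)

lemma RW_scale: "RW C d \<Phi> \<Longrightarrow> RW C d (\<lambda>x. c * \<Phi> x)"
proof (rule RW_intro)
  assume r: "RW C d \<Phi>"
  show "lin (\<lambda>x. c * \<Phi> x)" using r by (simp add: lin_scale RW_lin)
  fix A R i j m p
  show "p > m + 1 \<Longrightarrow> c * \<Phi> (mono (A @ [(i,m),(j,p)] @ R)) =
        qi d i (sgn_pow (p - m + 1) * C i j) * (c * \<Phi> (mono (A @ [(j,p),(i,m)] @ R)))"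
    using RW_R1[OF r, of m p A i j R] by simp
next
  assume r: "RW C d \<Phi>"
  fix A R i j p
  show "c * \<Phi> (mono (A @ [(i,p),(j,p+1)] @ R)) =
        qi d i (C i j) * (c * \<Phi> (mono (A @ [(j,p+1),(i,p)] @ R))) +
        (if i = j then (1 - qi d i 2) * (c * \<Phi> (mono (A @ R))) else 0)"
    using RW_R2[OF r, of A i p j R] by (simp add: algebra_simps)
qed

lemma lin_comp_right: "lin \<Phi> \<Longrightarrow> lin (\<lambda>x. \<Phi> (fmult x (mono b)))"
  unfolding lin_def by (simp add: fmult_add_left fmult_smul_left)

lemma lin_comp_left: "lin \<Phi> \<Longrightarrow> lin (\<lambda>x. \<Phi> (fmult (mono b) x))"
  unfolding lin_def by (simp add: fmult_add_right fmult_smul_right)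

lemma RW_comp_right: "RW C d \<Phi> \<Longrightarrow> RW C d (\<lambda>x. \<Phi> (fmult x (mono b)))"
proof (rule RW_intro)
  assume r: "RW C d \<Phi>"
  show "lin (\<lambda>x. \<Phi> (fmult x (mono b)))" using r by (simp add: lin_comp_right RW_lin)
  fix A R i j m p
  show "p > m + 1 \<Longrightarrow> \<Phi> (fmult (mono (A @ [(i,m),(j,p)] @ R)) (mono b)) =
        qi d i (sgn_pow (p - m + 1) * C i j) * \<Phi> (fmult (mono (A @ [(j,p),(i,m)] @ R)) (mono b))"
    using RW_R1[OF r, of m p A i j "R @ b"] by (simp add: fmult_mono_mono)
next
  assume r: "RW C d \<Phi>"
  fix A R i j p
  show "\<Phi> (fmult (mono (A @ [(i,p),(j,p+1)] @ R)) (mono b)) =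
        qi d i (C i j) * \<Phi> (fmult (mono (A @ [(j,p+1),(i,p)] @ R)) (mono b)) +
        (if i = j then (1 - qi d i 2) * \<Phi> (fmult (mono (A @ R)) (mono b)) else 0)"
    using RW_R2[OF r, of A i p j "R @ b"] by (simp add: fmult_mono_mono)
qed

lemma RW_comp_left: "RW C d \<Phi> \<Longrightarrow> RW C d (\<lambda>x. \<Phi> (fmult (mono b) x))"
proof (rule RW_intro)
  assume r: "RW C d \<Phi>"
  show "lin (\<lambda>x. \<Phi> (fmult (mono b) x))" using r by (simp add: lin_comp_left RW_lin)
  fix A R i j m p
  show "p > m + 1 \<Longrightarrow> \<Phi> (fmult (mono b) (mono (A @ [(i,m),(j,p)] @ R))) =
        qi d i (sgn_pow (p - m + 1) * C i j) * \<Phi> (fmult (mono b) (mono (A @ [(j,p),(i,m)] @ R)))"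
    using RW_R1[OF r, of m p "b @ A"] by (simp add: fmult_mono_mono)
next
  assume r: "RW C d \<Phi>"
  fix A R i j p
  show "\<Phi> (fmult (mono b) (mono (A @ [(i,p),(j,p+1)] @ R))) =
        qi d i (C i j) * \<Phi> (fmult (mono b) (mono (A @ [(j,p+1),(i,p)] @ R))) +
        (if i = j then (1 - qi d i 2) * \<Phi> (fmult (mono b) (mono (A @ R))) else 0)"
    using RW_R2[OF r, of "b @ A"] by (simp add: fmult_mono_mono)
qed

lemma fmult_zero_right[simp]: "fmult x (\<lambda>_. 0) = (\<lambda>_. 0)"
  unfolding fmult_def by auto

lemma diff_zero_fun[simp]: "(x::'a \<Rightarrow> K) - (\<lambda>_. 0) = x"
  by (simp add: fun_eq_iff)

lemma gen_mono: "gen a = mono [a]" by (simp add: gen_def)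

lemma rel_elem:
  "fmult (mono A) (fmult (fmult (gen a) (gen b) - smul q (fmult (gen b) (gen a)) - z) (mono R))
   = mono (A @ [a, b] @ R) - smul q (mono (A @ [b, a] @ R)) - fmult (mono A) (fmult z (mono R))"
  by (simp add: gen_mono fmult_mono_mono fmult_diff_left fmult_diff_right fmult_smul_left fmult_smul_right)

lemma rel1:
  assumes "p > m + 1"
  shows "mono (A @ [(i,m),(j,p)] @ R) - smul (qi d i (sgn_pow (p - m + 1) * C i j)) (mono (A @ [(j,p),(i,m)] @ R)) \<in> relideal C d"
proof -
  let ?q = "qi d i (sgn_pow (p - m + 1) * C i j)"
  let ?r = "fmult (gen (i, m)) (gen (j, p)) - smul ?q (fmult (gen (j, p)) (gen (i, m)))"
  have "?r \<in> relators C d" unfolding relators_def using assms by blast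
  then have "fmult (mono A) (fmult ?r (mono R)) \<in> relideal C d" by (rule relideal.rel)
  moreover have "fmult (mono A) (fmult ?r (mono R)) = fmult (mono A) (fmult (?r - (\<lambda>_. 0)) (mono R))"
    by (simp add: fun_diff_def)
  ultimately show ?thesis unfolding rel_elem by simp
qed

lemma rel2:
  "mono (A @ [(i,p),(j,p+1)] @ R) - smul (qi d i (C i j)) (mono (A @ [(j,p+1),(i,p)] @ R))
     - (if i = j then smul (1 - qi d i 2) (mono (A @ R)) else (\<lambda>_. 0)) \<in> relideal C d"
proof -
  let ?z = "(if i = j then smul (1 - qi d i 2) (mono []) else (\<lambda>_. 0))"
  let ?r = "fmult (gen (i, p)) (gen (j, p + 1)) - smul (qi d i (C i j)) (fmult (gen (j, p + 1)) (gen (i, p))) - ?z"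
  have "?r \<in> relators C d" unfolding relators_def by blast
  then have "fmult (mono A) (fmult ?r (mono R)) \<in> relideal C d" by (rule relideal.rel)
  moreover have "fmult (mono A) (fmult ?z (mono R)) = (if i = j then smul (1 - qi d i 2) (mono (A @ R)) else (\<lambda>_. 0))"
    by (simp add: fmult_smul_left fmult_smul_right fmult_mono_mono)
  ultimately show ?thesis unfolding rel_elem by simp
qed

lemma bf_add_left: "bosonic_form C d B \<Longrightarrow> supp_fin x \<Longrightarrow> supp_fin y \<Longrightarrow> supp_fin z \<Longrightarrow> B (x + y) z = B x z + B y z"
  unfolding bosonic_form_def by blast
lemma bf_add_right: "bosonic_form C d B \<Longrightarrow> supp_fin x \<Longrightarrow> supp_fin y \<Longrightarrow> supp_fin z \<Longrightarrow> B z (x + y) = B z x + B z y"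
  unfolding bosonic_form_def by blast
lemma bf_smul_left: "bosonic_form C d B \<Longrightarrow> supp_fin x \<Longrightarrow> supp_fin y \<Longrightarrow> B (smul c x) y = c * B x y"
  unfolding bosonic_form_def by blast
lemma bf_smul_right: "bosonic_form C d B \<Longrightarrow> supp_fin x \<Longrightarrow> supp_fin y \<Longrightarrow> B x (smul c y) = c * B x y"
  unfolding bosonic_form_def by blast
lemma bf_ideal_left: "bosonic_form C d B \<Longrightarrow> supp_fin x \<Longrightarrow> supp_fin x' \<Longrightarrow> supp_fin y \<Longrightarrow> x - x' \<in> relideal C d \<Longrightarrow> B x y = B x' y"
  unfolding bosonic_form_def by blast
lemma bf_ideal_right: "bosonic_form C d B \<Longrightarrow> supp_fin x \<Longrightarrow> supp_fin x' \<Longrightarrow> supp_fin y \<Longrightarrow> x - x' \<in> relideal C d \<Longrightarrow> B y x = B y x'"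
  unfolding bosonic_form_def by blast
lemma bf_sym: "bosonic_form C d B \<Longrightarrow> supp_fin x \<Longrightarrow> supp_fin y \<Longrightarrow> B x y = B y x"
  unfolding bosonic_form_def by blast
lemma bf_pd: "bosonic_form C d B \<Longrightarrow>
        (\<forall>k\<in>{a..a + int n}. X k \<in> Ak_hom k (gx k) \<and> Y k \<in> Ak_hom k (gy k)) \<Longrightarrow>
        B (pd X a n) (pd Y a n) =
          (\<Prod>k\<in>{a..a + int n}. kappa d (\<lambda>j. gx k j + gy k j) * LusF C d (X k) (Y k))"
  unfolding bosonic_form_def by blast

lemma diff3: "(x::'a list \<Rightarrow> K) - smul q y - (if b then smul c z else (\<lambda>_. 0)) = x - (smul q y + (if b then smul c z else (\<lambda>_. 0)))"
  by (auto simp: fun_eq_iff fun_diff_def smul_def)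

lemma lin_B_left: "bosonic_form C d B \<Longrightarrow> supp_fin v \<Longrightarrow> lin (\<lambda>x. B x v)"
  unfolding lin_def by (simp add: bf_add_left bf_smul_left)

lemma lin_B_right: "bosonic_form C d B \<Longrightarrow> supp_fin v \<Longrightarrow> lin (\<lambda>x. B v x)"
  unfolding lin_def by (simp add: bf_add_right bf_smul_right)

lemma RW_of_resp:
  assumes l: "lin \<Phi>"
    and resp: "\<And>x x'. supp_fin x \<Longrightarrow> supp_fin x' \<Longrightarrow> x - x' \<in> relideal C d \<Longrightarrow> \<Phi> x = \<Phi> x'"
  shows "RW C d \<Phi>"
proof (rule RW_intro[OF l])
  fix A R i j and m p :: int
  assume "p > m + 1"
  have e: "\<Phi> (mono (A @ [(i,m),(j,p)] @ R)) = \<Phi> (smul (qi d i (sgn_pow (p - m + 1) * C i j)) (mono (A @ [(j,p),(i,m)] @ R)))"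
    by (rule resp) (use rel1[OF \<open>p > m + 1\<close>] in auto)
  then show "\<Phi> (mono (A @ [(i,m),(j,p)] @ R)) =
        qi d i (sgn_pow (p - m + 1) * C i j) * \<Phi> (mono (A @ [(j,p),(i,m)] @ R))"
    using lin_smul[OF l] by simp
next
  fix A R i j and p :: int
  let ?x' = "smul (qi d i (C i j)) (mono (A @ [(j,p+1),(i,p)] @ R)) + (if i = j then smul (1 - qi d i 2) (mono (A @ R)) else (\<lambda>_. 0))"
  have sf: "supp_fin ?x'" by simp
  have "\<Phi> (mono (A @ [(i,p),(j,p+1)] @ R)) = \<Phi> ?x'"
    using rel2[of A i p j R d C] resp[OF _ sf] unfolding diff3 by simp
  also have "\<dots> = qi d i (C i j) * \<Phi> (mono (A @ [(j,p+1),(i,p)] @ R)) +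
        (if i = j then (1 - qi d i 2) * \<Phi> (mono (A @ R)) else 0)"
    by (simp add: lin_add[OF l] lin_smul[OF l] lin_zero[OF l])
  finally show "\<Phi> (mono (A @ [(i,p),(j,p+1)] @ R)) = qi d i (C i j) * \<Phi> (mono (A @ [(j,p+1),(i,p)] @ R)) +
        (if i = j then (1 - qi d i 2) * \<Phi> (mono (A @ R)) else 0)" .
qed

lemma RW_B_left: "bosonic_form C d B \<Longrightarrow> supp_fin v \<Longrightarrow> RW C d (\<lambda>x. B x v)"
  by (rule RW_of_resp[OF lin_B_left]) (auto intro: bf_ideal_left)

lemma RW_B_right: "bosonic_form C d B \<Longrightarrow> supp_fin v \<Longrightarrow> RW C d (\<lambda>x. B v x)"
  by (rule RW_of_resp[OF lin_B_right]) (auto intro: bf_ideal_right)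

definition ordw :: "('a \<times> int) list \<Rightarrow> bool" where
  "ordw w \<longleftrightarrow> sorted_wrt (\<lambda>x y. snd y \<le> snd x) w"

fun invc :: "('a \<times> int) list \<Rightarrow> nat" where
  "invc [] = 0"
| "invc (l # w) = length (filter (\<lambda>l'. snd l < snd l') w) + invc w"

lemma invc_swap: "snd l1 < snd l2 \<Longrightarrow> invc (A @ [l2, l1] @ R) < invc (A @ [l1, l2] @ R)"
proof (induction A)
  case Nil
  then show ?case by simp
next
  case (Cons a A)
  have "length (filter (\<lambda>l'. snd a < snd l') (A @ [l2, l1] @ R)) = length (filter (\<lambda>l'. snd a < snd l') (A @ [l1, l2] @ R))"
    by simp
  then show ?case using Cons by simp
qed

lemma sgn_pow_succ: "sgn_pow (m + 1) = - sgn_pow m"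
  unfolding sgn_pow_def by auto

lemma wtw_append: "wtw (u @ v) = (\<lambda>j. wtw u j + wtw v j)"
  unfolding wtw_def by (simp add: fun_eq_iff)

lemma wtw_Cons: "wtw (l # v) = (\<lambda>j. (if fst l = j then sgn_pow (snd l + 1) else 0) + wtw v j)"
  unfolding wtw_def by (cases l) (simp add: fun_eq_iff)

lemma wtw_swap: "wtw (A @ [l2, l1] @ R) = wtw (A @ [l1, l2] @ R)"
  by (simp add: wtw_append wtw_Cons fun_eq_iff)

lemma wtw_cancel: "wtw (A @ [(i, m), (i, m + 1)] @ R) = wtw (A @ R)"
proof -
  have "sgn_pow (m + 1 + 1) = - sgn_pow (m + 1)" using sgn_pow_succ by blast
  then show ?thesis by (simp add: wtw_append wtw_Cons fun_eq_iff)
qed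

lemma split_adj: "Suc s < length w \<Longrightarrow> take s w @ [w ! s, w ! Suc s] @ drop (Suc (Suc s)) w = w"
  by (metis Cons_nth_drop_Suc Suc_lessD append_Cons append_Nil append_take_drop_id)

lemma not_ordw: "\<not> ordw w \<Longrightarrow> \<exists>s. Suc s < length w \<and> snd (w ! s) < snd (w ! Suc s)"
proof -
  assume "\<not> ordw w"
  moreover have "transp (\<lambda>x y :: ('a \<times> int). snd y \<le> snd x)"
    by (auto simp: transp_def)
  ultimately show ?thesis
    unfolding ordw_def by (auto simp: sorted_wrt_iff_nth_Suc_transp not_le)
qed

definition OSw :: "('i \<Rightarrow> int) \<Rightarrow> (('i \<times> int) list \<Rightarrow> K) \<Rightarrow> bool" where
  "OSw \<beta> y \<longleftrightarrow> supp_fin y \<and> (\<forall>w'. y w' \<noteq> 0 \<longrightarrow> ordw w' \<and> wtw w' = \<beta>)"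

lemma OSw_smul: "OSw \<beta> y \<Longrightarrow> OSw \<beta> (smul c y)"
proof -
  assume a: "OSw \<beta> y"
  show ?thesis unfolding OSw_def
  proof (intro conjI allI impI)
    show "supp_fin (smul c y)" using a by (simp add: OSw_def)
    fix w' assume "smul c y w' \<noteq> 0"
    then have "y w' \<noteq> 0" by (simp add: smul_def)
    then show "ordw w'" "wtw w' = \<beta>" using a by (simp_all add: OSw_def)
  qed
qed

lemma OSw_add: "OSw \<beta> y \<Longrightarrow> OSw \<beta> z \<Longrightarrow> OSw \<beta> (y + z)"
  unfolding OSw_def by (metis add.left_neutral plus_fun_apply supp_fin_add)

lemma OSw_zero: "OSw \<beta> (\<lambda>_. 0)"
  unfolding OSw_def by simp

lemma straighten:
  fixes C :: "'i \<Rightarrow> 'i \<Rightarrow> int" and d :: "'i \<Rightarrow> nat"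
  shows "\<exists>y. OSw (wtw w) y \<and> (\<forall>\<Phi>. RW C d \<Phi> \<longrightarrow> \<Phi> (mono w) = \<Phi> y)"
proof (induction w rule: wf_induct[OF wf_measures[of "[length, invc]"]])
  case (1 w)
  show ?case
  proof (cases "ordw w")
    case True
    then show ?thesis
    proof (intro exI[of _ "mono w"] conjI allI impI)
      show "OSw (wtw w) (mono w)" unfolding OSw_def
        using True by (simp add: mono_apply)
    qed simp
  next
    case False
    then obtain s where s: "Suc s < length w" "snd (w ! s) < snd (w ! Suc s)"
      using not_ordw by blast
    define A where "A = take s w"
    define R where "R = drop (Suc (Suc s)) w"
    obtain i m where l1: "w ! s = (i, m)" by (cases "w ! s")
    obtain j p where l2: "w ! Suc s = (j, p)" by (cases "w ! Suc s")
    have w: "w = A @ [(i, m), (j, p)] @ R"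
      using split_adj[OF s(1)] l1 l2 unfolding A_def R_def by simp
    have mp: "m < p" using s(2) l1 l2 by simp
    define w1 where "w1 = A @ [(j, p), (i, m)] @ R"
    have "(w1, w) \<in> measures [length, invc]"
      using invc_swap[of "(i, m)" "(j, p)" A R] mp unfolding w w1_def by simp
    then obtain y1 where y1: "OSw (wtw w1) y1" "\<forall>\<Phi>. RW C d \<Phi> \<longrightarrow> \<Phi> (mono w1) = \<Phi> y1"
      using 1 by blast
    have wt1: "wtw w1 = wtw w" unfolding w w1_def by (rule wtw_swap)
    show ?thesis
    proof (cases "p > m + 1")
      case True
      let ?q = "qi d i (sgn_pow (p - m + 1) * C i j)"
      show ?thesis
      proof (intro exI[of _ "smul ?q y1"] conjI allI impI)
        show "OSw (wtw w) (smul ?q y1)"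
          using OSw_smul y1(1) wt1 by metis
        fix \<Phi> assume r: "RW C d \<Phi>"
        have "\<Phi> (mono w) = ?q * \<Phi> (mono w1)"
          unfolding w w1_def by (rule RW_R1[OF r True])
        also have "\<dots> = \<Phi> (smul ?q y1)"
          using y1 y1(2)[rule_format, OF r] r lin_smul[OF RW_lin[OF r]] by (simp add: OSw_def)
        finally show "\<Phi> (mono w) = \<Phi> (smul ?q y1)" .
      qed
    next
      case False
      then have pm: "p = m + 1" using mp by simp
      define w2 where "w2 = A @ R"
      have "(w2, w) \<in> measures [length, invc]"
        unfolding w w2_def by simp
      then obtain y2 where y2: "OSw (wtw w2) y2" "\<forall>\<Phi>. RW C d \<Phi> \<longrightarrow> \<Phi> (mono w2) = \<Phi> y2"
        using 1 by blast
      let ?q = "qi d i (C i j)"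
      let ?y = "smul ?q y1 + (if i = j then smul (1 - qi d i 2) y2 else (\<lambda>_. 0))"
      show ?thesis
      proof (intro exI[of _ ?y] conjI allI impI)
        have wt2: "i = j \<Longrightarrow> wtw w2 = wtw w"
          unfolding w w2_def pm using wtw_cancel by metis
        show "OSw (wtw w) ?y"
        proof (cases "i = j")
          case True
          then have "OSw (wtw w) y2" using y2(1) wt2 by simp
          then show ?thesis using True y1(1) wt1 by (simp add: OSw_add OSw_smul)
        next
          case False
          show ?thesis using False OSw_add[OF OSw_smul[of _ y1] OSw_zero] y1(1) wt1 by simp
        qed
        fix \<Phi> assume r: "RW C d \<Phi>"
        have "\<Phi> (mono w) = ?q * \<Phi> (mono w1) + (if i = j then (1 - qi d i 2) * \<Phi> (mono w2) else 0)"
          unfolding w w1_def w2_def pm by (rule RW_R2[OF r])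
        also have "\<dots> = \<Phi> ?y"
        proof -
          have e1: "\<Phi> (mono w1) = \<Phi> y1" using y1(2) r by blast
          have e2: "\<Phi> (mono w2) = \<Phi> y2" using y2(2) r by blast
          have s1: "supp_fin y1" "supp_fin y2" using y1(1) y2(1) by (simp_all add: OSw_def)
          show ?thesis
            using lin_smul[OF RW_lin[OF r]] lin_add[OF RW_lin[OF r]] lin_zero[OF RW_lin[OF r]] s1
            by (cases "i = j") (simp_all add: e1 e2)
        qed
        finally show "\<Phi> (mono w) = \<Phi> ?y" .
      qed
    qed
  qed
qed

definition blk :: "int \<Rightarrow> ('a \<times> int) list \<Rightarrow> ('a \<times> int) list" where
  "blk m w = filter (\<lambda>l. snd l = m) w"

definition lev :: "int \<Rightarrow> 'a list \<Rightarrow> ('a \<times> int) list" where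
  "lev m a = map (\<lambda>j. (j, m)) a"

definition cnt :: "'a list \<Rightarrow> 'a \<Rightarrow> nat" where
  "cnt a = (\<lambda>j. count (mset a) j)"

definition KK :: "('i \<Rightarrow> 'i \<Rightarrow> int) \<Rightarrow> ('i::finite \<Rightarrow> nat) \<Rightarrow> 'i list \<Rightarrow> 'i list \<Rightarrow> K" where
  "KK C d a b = kappa d (\<lambda>j. cnt a j + cnt b j) * Lw C d a b"

definition fac :: "('i \<Rightarrow> 'i \<Rightarrow> int) \<Rightarrow> ('i::finite \<Rightarrow> nat) \<Rightarrow> int \<Rightarrow> ('i \<times> int) list \<Rightarrow> ('i \<times> int) list \<Rightarrow> K" where
  "fac C d m x z = KK C d (map fst (blk m x)) (map fst (blk m z))"

lemma LusF_mono: "LusF C d (mono u) (mono v) = Lw C d (map fst u) (map fst v)"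
proof -
  have e: "\<And>u. {w. mono u w \<noteq> 0} = {u}" by (auto simp: mono_apply)
  show ?thesis unfolding LusF_def e by (simp add: mono_apply)
qed

lemma filter_split:
  assumes "ordw x" "\<And>l l'. P l \<Longrightarrow> Q l' \<Longrightarrow> snd l' < snd l" "\<And>l. \<not> (P l \<and> Q l)"
  shows "filter (\<lambda>l. P l \<or> Q l) x = filter P x @ filter Q x"
  using assms(1)
proof (induction x)
  case Nil
  then show ?case by simp
next
  case (Cons y x)
  have ox: "ordw x" and le: "\<forall>l\<in>set x. snd l \<le> snd y" using Cons.prems by (auto simp: ordw_def)
  have IH: "filter (\<lambda>l. P l \<or> Q l) x = filter P x @ filter Q x" using Cons.IH ox by blast
  show ?case
  proof (cases "P y")
    case True
    then show ?thesis using IH assms(3)[of y] by simp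
  next
    case False
    note nP = False
    show ?thesis
    proof (cases "Q y")
      case True
      have "filter P x = []"
        unfolding filter_empty_conv
      proof (intro ballI notI)
        fix l assume "l \<in> set x" "P l"
        then have "snd y < snd l" using assms(2)[OF _ True] by blast
        then show False using le \<open>l \<in> set x\<close> by fastforce
      qed
      then show ?thesis using IH True nP by simp
    next
      case False
      then show ?thesis using IH nP by simp
    qed
  qed
qed

lemma pd_blk:
  assumes "ordw x"
  shows "pd (\<lambda>m. mono (blk m x)) a n = mono (filter (\<lambda>l. a \<le> snd l \<and> snd l \<le> a + int n) x)"
proof (induction n)
  case 0
  have "filter (\<lambda>l. a \<le> snd l \<and> snd l \<le> a) x = blk a x"
    unfolding blk_def by (rule filter_cong) auto
  then show ?case by simp
next
  case (Suc n)
  have "filter (\<lambda>l. a \<le> snd l \<and> snd l \<le> a + int (Suc n)) x =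
        filter (\<lambda>l. snd l = a + int (Suc n) \<or> (a \<le> snd l \<and> snd l \<le> a + int n)) x"
    by (rule filter_cong) auto
  also have "\<dots> = blk (a + int (Suc n)) x @ filter (\<lambda>l. a \<le> snd l \<and> snd l \<le> a + int n) x"
    unfolding blk_def by (rule filter_split[OF assms]) auto
  finally show ?case using Suc by (simp add: fmult_mono_mono)
qed

lemma count_map_fst: "count (mset (map fst ys)) j = length (filter (\<lambda>l. fst l = j) ys)"
  by (induction ys) auto

lemma blk_Ak: "mono (blk m x) \<in> Ak_hom m (\<lambda>j. length (filter (\<lambda>l. fst l = j) (blk m x)))"
  unfolding Ak_hom_def by (auto simp: mono_apply blk_def)

lemma fac_out: "m \<notin> snd ` set x \<Longrightarrow> m \<notin> snd ` set z \<Longrightarrow> fac C d m x z = 1"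
proof -
  assume "m \<notin> snd ` set x" "m \<notin> snd ` set z"
  then have "blk m x = []" "blk m z = []" unfolding blk_def by (auto simp: filter_empty_conv)
  then show ?thesis unfolding fac_def KK_def cnt_def by simp
qed

lemma ORD_B:
  assumes bf: "bosonic_form C d B" and ox: "ordw x" and oz: "ordw z"
    and S: "finite S" "snd ` set x \<union> snd ` set z \<subseteq> S"
  shows "B (mono x) (mono z) = (\<Prod>m\<in>S. fac C d m x z)"
proof -
  define S0 where "S0 = insert 0 S"
  have fS0: "finite S0" "S0 \<noteq> {}" using S unfolding S0_def by auto
  define a where "a = Min S0"
  define M where "M = Max S0"
  define n where "n = nat (M - a)"
  have aM: "a \<le> M" using fS0 unfolding a_def M_def by simp
  have rng: "{a..a + int n} = {a..M}" using aM unfolding n_def by simp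
  have sub: "S \<subseteq> {a..M}" using fS0 unfolding a_def M_def S0_def by auto
  have allx: "\<forall>l\<in>set x. a \<le> snd l \<and> snd l \<le> a + int n"
  proof
    fix l assume "l \<in> set x"
    then have "snd l \<in> S" using S(2) by blast
    then have "snd l \<in> {a..M}" using sub by blast
    then show "a \<le> snd l \<and> snd l \<le> a + int n" using rng by auto
  qed
  have allz: "\<forall>l\<in>set z. a \<le> snd l \<and> snd l \<le> a + int n"
  proof
    fix l assume "l \<in> set z"
    then have "snd l \<in> S" using S(2) by blast
    then have "snd l \<in> {a..M}" using sub by blast
    then show "a \<le> snd l \<and> snd l \<le> a + int n" using rng by auto
  qed
  have px: "pd (\<lambda>m. mono (blk m x)) a n = mono x"
    using pd_blk[OF ox, of a n] allx by (simp add: filter_id_conv)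
  have pz: "pd (\<lambda>m. mono (blk m z)) a n = mono z"
    using pd_blk[OF oz, of a n] allz by (simp add: filter_id_conv)
  have "B (mono x) (mono z) = B (pd (\<lambda>m. mono (blk m x)) a n) (pd (\<lambda>m. mono (blk m z)) a n)"
    using px pz by simp
  also have "\<dots> = (\<Prod>m\<in>{a..a + int n}. kappa d (\<lambda>j. length (filter (\<lambda>l. fst l = j) (blk m x)) + length (filter (\<lambda>l. fst l = j) (blk m z)))
                     * LusF C d (mono (blk m x)) (mono (blk m z)))"
    by (rule bf_pd[OF bf]) (simp add: blk_Ak)
  also have "\<dots> = (\<Prod>m\<in>{a..M}. fac C d m x z)"
    unfolding rng fac_def KK_def cnt_def LusF_mono count_map_fst by simp
  also have "\<dots> = (\<Prod>m\<in>S. fac C d m x z)"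
    by (rule prod.mono_neutral_right) (use sub S(2) in \<open>auto intro!: fac_out\<close>)
  finally show ?thesis .
qed

fun dL :: "('i \<Rightarrow> 'i \<Rightarrow> int) \<Rightarrow> ('i \<Rightarrow> nat) \<Rightarrow> 'i \<Rightarrow> int \<Rightarrow> ('i list \<Rightarrow> K) \<Rightarrow> 'i list \<Rightarrow> K" where
  "dL C d i sg F [] = 0"
| "dL C d i sg F (j # v) = (if j = i then F v else 0) + qi d i (sg * C i j) * dL C d i sg (\<lambda>w. F (j # w)) v"

fun dR :: "('i \<Rightarrow> 'i \<Rightarrow> int) \<Rightarrow> ('i \<Rightarrow> nat) \<Rightarrow> 'i \<Rightarrow> int \<Rightarrow> ('i list \<Rightarrow> K) \<Rightarrow> 'i list \<Rightarrow> K" where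
  "dR C d i sg F [] = 0"
| "dR C d i sg F (j # v) = (if j = i then qi d i (sg * sum_list (map (C i) v)) * F v else 0) + dR C d i sg (\<lambda>w. F (j # w)) v"

lemma dL_sum:
  "(\<Sum>s\<in>{..<length v}. if v ! s = i then qi d i (- (\<Sum>t<s. C i (v ! t))) * F (take s v @ drop (Suc s) v) else 0)
   = dL C d i (-1) F v"
proof (induction v arbitrary: F)
  case Nil
  then show ?case by simp
next
  case (Cons j v)
  have "(\<Sum>s\<in>{..<length (j # v)}. if (j # v) ! s = i then qi d i (- (\<Sum>t<s. C i ((j # v) ! t))) * F (take s (j # v) @ drop (Suc s) (j # v)) else 0)
      = (if j = i then F v else 0) +
        (\<Sum>s\<in>{..<length v}. if v ! s = i then qi d i (- (C i j + (\<Sum>t<s. C i (v ! t)))) * F (j # (take s v @ drop (Suc s) v)) else 0)"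
  proof -
    have inner: "\<And>s. (\<Sum>t<Suc s. C i ((j # v) ! t)) = C i j + (\<Sum>t<s. C i (v ! t))"
      by (simp only: sum.lessThan_Suc_shift) simp
    have tk: "\<And>s. take (Suc s) (j # v) @ drop (Suc (Suc s)) (j # v) = j # (take s v @ drop (Suc s) v)"
      by simp
    show ?thesis
      apply (simp only: sum.lessThan_Suc_shift length_Cons)
      apply (simp only: nth_Cons_0 nth_Cons_Suc inner tk)
      apply simp
      done
  qed
  also have "(\<Sum>s\<in>{..<length v}. if v ! s = i then qi d i (- (C i j + (\<Sum>t<s. C i (v ! t)))) * F (j # (take s v @ drop (Suc s) v)) else 0)
      = qi d i (- 1 * C i j) * (\<Sum>s\<in>{..<length v}. if v ! s = i then qi d i (- (\<Sum>t<s. C i (v ! t))) * F (j # (take s v @ drop (Suc s) v)) else 0)"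
    unfolding sum_distrib_left by (rule sum.cong) (auto simp: qi_add[symmetric])
  also have "(\<Sum>s\<in>{..<length v}. if v ! s = i then qi d i (- (\<Sum>t<s. C i (v ! t))) * F (j # (take s v @ drop (Suc s) v)) else 0)
      = dL C d i (-1) (\<lambda>w. F (j # w)) v"
    using Cons.IH[of "\<lambda>w. F (j # w)"] by simp
  finally show ?case by simp
qed

lemma Lw_Cons: "Lw C d (i # u) v = inverse (1 - qi d i 2) * dL C d i (-1) (Lw C d u) v"
  by (simp only: Lw.simps dL_sum)

lemma dL_cmult: "dL C d i sg (\<lambda>w. c * F w) v = c * dL C d i sg F v"
  by (induction v arbitrary: F) (auto simp: algebra_simps)

lemma dR_cmult: "dR C d i sg (\<lambda>w. c * F w) v = c * dR C d i sg F v"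
  by (induction v arbitrary: F) (auto simp: algebra_simps)

lemma dL_zero: "dL C d i sg (\<lambda>w. 0) v = 0"
  by (induction v) auto

lemma dR_zero: "dR C d i sg (\<lambda>w. 0) v = 0"
  by (induction v) auto

lemma dL_cong: "(\<And>w. mset (i # w) = mset v \<Longrightarrow> F w = G w) \<Longrightarrow> dL C d i sg F v = dL C d i sg G v"
proof (induction v arbitrary: F G)
  case Nil
  then show ?case by simp
next
  case (Cons j v)
  have "dL C d i sg (\<lambda>w. F (j # w)) v = dL C d i sg (\<lambda>w. G (j # w)) v"
    by (rule Cons.IH) (use Cons.prems in \<open>auto simp: add_mset_commute\<close>)
  moreover have "j = i \<Longrightarrow> F v = G v" using Cons.prems by simp
  ultimately show ?case by simp
qed

lemma dR_cong: "(\<And>w. mset (i # w) = mset v \<Longrightarrow> F w = G w) \<Longrightarrow> dR C d i sg F v = dR C d i sg G v"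
proof (induction v arbitrary: F G)
  case Nil
  then show ?case by simp
next
  case (Cons j v)
  have "dR C d i sg (\<lambda>w. F (j # w)) v = dR C d i sg (\<lambda>w. G (j # w)) v"
    by (rule Cons.IH) (use Cons.prems in \<open>auto simp: add_mset_commute\<close>)
  moreover have "j = i \<Longrightarrow> F v = G v" using Cons.prems by simp
  ultimately show ?case by simp
qed

lemma dL_nz: "dL C d i sg F v \<noteq> 0 \<Longrightarrow> \<exists>w. mset (i # w) = mset v \<and> F w \<noteq> 0"
proof (rule ccontr)
  assume a: "dL C d i sg F v \<noteq> 0" "\<not> (\<exists>w. mset (i # w) = mset v \<and> F w \<noteq> 0)"
  then have "dL C d i sg F v = dL C d i sg (\<lambda>_. 0) v" by (intro dL_cong) blast
  then show False using a(1) by (simp add: dL_zero)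
qed

lemma dR_nz: "dR C d i sg F v \<noteq> 0 \<Longrightarrow> \<exists>w. mset (i # w) = mset v \<and> F w \<noteq> 0"
proof (rule ccontr)
  assume a: "dR C d i sg F v \<noteq> 0" "\<not> (\<exists>w. mset (i # w) = mset v \<and> F w \<noteq> 0)"
  then have "dR C d i sg F v = dR C d i sg (\<lambda>_. 0) v" by (intro dR_cong) blast
  then show False using a(1) by (simp add: dR_zero)
qed

lemma Lw_mset: "Lw C d u v \<noteq> 0 \<Longrightarrow> mset u = mset v"
proof (induction u arbitrary: v)
  case Nil
  then show ?case by (simp split: if_splits)
next
  case (Cons i u)
  have "inverse (1 - qi d i 2) * dL C d i (-1) (Lw C d u) v \<noteq> 0"
    using Cons.prems Lw_Cons[of C d i u v] by metis
  then have nz: "dL C d i (-1) (Lw C d u) v \<noteq> 0" by (metis mult_zero_right)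
  obtain w where "mset (i # w) = mset v" "Lw C d u w \<noteq> 0" using dL_nz[OF nz] by blast
  then show ?case using Cons.IH by simp
qed

lemma sum_list_mset: "mset a = mset b \<Longrightarrow> sum_list (map (f :: 'a \<Rightarrow> 'b :: comm_monoid_add) a) = sum_list (map f b)"
proof -
  assume h: "mset a = mset b"
  have "mset (map f a) = mset (map f b)" using h by (simp only: mset_map)
  then have "sum_mset (mset (map f a)) = sum_mset (mset (map f b))" by simp
  then show ?thesis by (simp only: sum_mset_sum_list)
qed

lemma dLR:
  assumes "C i i = 2"
  shows "dL C d i sg F v = qi d i (sg * (sum_list (map (C i) v) - 2)) * dR C d i (- sg) F v"
proof (induction v arbitrary: F)
  case Nil
  then show ?case by simp
next
  case (Cons j v)
  have e1: "j = i \<Longrightarrow> qi d i (sg * (sum_list (map (C i) (j # v)) - 2)) * qi d i (- sg * sum_list (map (C i) v)) = 1"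
    using assms by (simp add: qi_add[symmetric] algebra_simps)
  have e2: "qi d i (sg * C i j) * qi d i (sg * (sum_list (map (C i) v) - 2)) = qi d i (sg * (sum_list (map (C i) (j # v)) - 2))"
    by (simp add: qi_add[symmetric] algebra_simps)
  show ?case
    using Cons.IH[of "\<lambda>w. F (j # w)"] e1 e2
    by (simp add: algebra_simps) (metis (no_types, lifting) mult.assoc mult.commute mult_1)
qed

lemma dL_add: "dL C d i sg (\<lambda>w. F w + G w) v = dL C d i sg F v + dL C d i sg G v"
  by (induction v arbitrary: F G) (auto simp: algebra_simps)

lemma dR_add: "dR C d i sg (\<lambda>w. F w + G w) v = dR C d i sg F v + dR C d i sg G v"
  by (induction v arbitrary: F G) (auto simp: algebra_simps)

lemma dL_sumw:
  "dL C d j sg (\<lambda>w. qi d i (sg * sum_list (map (C i) w)) * G w) v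
   = qi d i (sg * (sum_list (map (C i) v) - C i j)) * dL C d j sg G v"
proof -
  have "dL C d j sg (\<lambda>w. qi d i (sg * sum_list (map (C i) w)) * G w) v
      = dL C d j sg (\<lambda>w. qi d i (sg * (sum_list (map (C i) v) - C i j)) * G w) v"
  proof (rule dL_cong)
    fix w assume "mset (j # w) = mset v"
    then have "sum_list (map (C i) (j # w)) = sum_list (map (C i) v)" by (rule sum_list_mset)
    then have "sum_list (map (C i) w) = sum_list (map (C i) v) - C i j" by simp
    then show "qi d i (sg * sum_list (map (C i) w)) * G w = qi d i (sg * (sum_list (map (C i) v) - C i j)) * G w"
      by simp
  qed
  then show ?thesis by (simp add: dL_cmult)
qed

lemma COMM:
  assumes sym: "\<And>a b. int (d a) * C a b = int (d b) * C b a"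
  shows "dL C d j sg (\<lambda>w. dR C d i sg G w) v = dR C d i sg (\<lambda>w. dL C d j sg G w) v"
proof (induction v arbitrary: G)
  case Nil
  then show ?case by simp
next
  case (Cons a v)
  have L1: "dL C d j sg (\<lambda>w. dR C d i sg G (a # w)) v =
      (if a = i then qi d i (sg * (sum_list (map (C i) v) - C i j)) * dL C d j sg G v else 0) +
      dR C d i sg (\<lambda>w. dL C d j sg (\<lambda>w'. G (a # w')) w) v"
  proof -
    have "dL C d j sg (\<lambda>w. dR C d i sg G (a # w)) v =
        dL C d j sg (\<lambda>w. (if a = i then qi d i (sg * sum_list (map (C i) w)) * G w else 0)) v +
        dL C d j sg (\<lambda>w. dR C d i sg (\<lambda>w'. G (a # w')) w) v"
      by (simp add: dL_add[symmetric])
    also have "dL C d j sg (\<lambda>w. (if a = i then qi d i (sg * sum_list (map (C i) w)) * G w else 0)) v =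
        (if a = i then qi d i (sg * (sum_list (map (C i) v) - C i j)) * dL C d j sg G v else 0)"
      by (cases "a = i") (simp_all add: dL_sumw dL_zero)
    finally show ?thesis using Cons.IH by simp
  qed
  have R1: "dR C d i sg (\<lambda>w. dL C d j sg G (a # w)) v =
      (if a = j then dR C d i sg G v else 0) +
      qi d j (sg * C j a) * dR C d i sg (\<lambda>w. dL C d j sg (\<lambda>w'. G (a # w')) w) v"
  proof -
    have "dR C d i sg (\<lambda>w. dL C d j sg G (a # w)) v =
        dR C d i sg (\<lambda>w. (if a = j then G w else 0)) v +
        dR C d i sg (\<lambda>w. qi d j (sg * C j a) * dL C d j sg (\<lambda>w'. G (a # w')) w) v"
      by (simp add: dR_add[symmetric])
    also have "dR C d i sg (\<lambda>w. (if a = j then G w else 0)) v = (if a = j then dR C d i sg G v else 0)"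
      by (cases "a = j") (simp_all add: dR_zero)
    finally show ?thesis by (simp add: dR_cmult)
  qed
  have key: "a = i \<Longrightarrow> qi d j (sg * C j a) * qi d i (sg * (sum_list (map (C i) v) - C i j)) = qi d i (sg * sum_list (map (C i) v))"
  proof -
    assume ai: "a = i"
    have "qi d j (sg * C j i) = qi d i (sg * C i j)" using qi_sym[of d j C i sg] sym by simp
    then show ?thesis using ai by (simp add: qi_add[symmetric] algebra_simps)
  qed
  show ?case
    using L1 R1 key by (cases "a = i"; cases "a = j") (simp_all add: algebra_simps)
qed

lemma dLR_base: "dL C d i sg (Lw C d []) v = dR C d i sg (Lw C d []) v"
proof (cases v)
  case Nil
  then show ?thesis by simp
next
  case (Cons j v')
  have z: "(\<lambda>w. Lw C d [] (j # w)) = (\<lambda>w. 0)" by simp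
  show ?thesis unfolding Cons by (simp only: dL.simps dR.simps z dL_zero dR_zero) simp
qed

lemma Lw_snoc:
  assumes sym: "\<And>a b. int (d a) * C a b = int (d b) * C b a"
  shows "Lw C d (u @ [i]) v = inverse (1 - qi d i 2) * dR C d i (-1) (Lw C d u) v"
proof (induction u arbitrary: v)
  case Nil
  show ?case by (simp only: append_Nil Lw_Cons dLR_base)
next
  case (Cons j u)
  have f: "Lw C d (u @ [i]) = (\<lambda>w. inverse (1 - qi d i 2) * dR C d i (-1) (Lw C d u) w)"
    using Cons.IH by blast
  have "Lw C d ((j # u) @ [i]) v = inverse (1 - qi d j 2) * dL C d j (-1) (Lw C d (u @ [i])) v"
    using Lw_Cons[of C d j "u @ [i]" v] by simp
  also have "\<dots> = inverse (1 - qi d j 2) * (inverse (1 - qi d i 2) * dL C d j (-1) (\<lambda>w. dR C d i (-1) (Lw C d u) w) v)"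
    unfolding f dL_cmult by simp
  also have "dL C d j (-1) (\<lambda>w. dR C d i (-1) (Lw C d u) w) v = dR C d i (-1) (\<lambda>w. dL C d j (-1) (Lw C d u) w) v"
    by (rule COMM[OF sym])
  also have "inverse (1 - qi d j 2) * (inverse (1 - qi d i 2) * dR C d i (-1) (\<lambda>w. dL C d j (-1) (Lw C d u) w) v)
      = inverse (1 - qi d i 2) * dR C d i (-1) (\<lambda>w. inverse (1 - qi d j 2) * dL C d j (-1) (Lw C d u) w) v"
    by (simp add: dR_cmult)
  also have "(\<lambda>w. inverse (1 - qi d j 2) * dL C d j (-1) (Lw C d u) w) = Lw C d (j # u)"
    by (rule ext) (simp only: Lw_Cons)
  finally show ?case .
qed

lemma ordw_lev[simp]: "ordw (lev m a)"
  unfolding ordw_def lev_def by (induction a) auto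

lemma blk_lev_same[simp]: "blk m (lev m a) = lev m a"
  unfolding blk_def lev_def by (induction a) auto

lemma blk_lev_other[simp]: "m' \<noteq> m \<Longrightarrow> blk m' (lev m a) = []"
  unfolding blk_def lev_def by (induction a) auto

lemma map_fst_lev[simp]: "map fst (lev m a) = a"
  unfolding lev_def by (induction a) auto

lemma snd_lev: "snd ` set (lev m a) \<subseteq> {m}"
  unfolding lev_def by auto

lemma Lw_sym:
  assumes bf: "bosonic_form C d B" and dpos: "\<forall>j. d j > 0"
  shows "Lw C d u v = Lw C d v u"
proof -
  have "B (mono (lev 0 u)) (mono (lev 0 v)) = (\<Prod>m\<in>{0}. fac C d m (lev 0 u) (lev 0 v))"
    by (rule ORD_B[OF bf]) (use snd_lev in auto)
  then have e1: "B (mono (lev 0 u)) (mono (lev 0 v)) = KK C d u v" by (simp add: fac_def)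
  have "B (mono (lev 0 v)) (mono (lev 0 u)) = (\<Prod>m\<in>{0}. fac C d m (lev 0 v) (lev 0 u))"
    by (rule ORD_B[OF bf]) (use snd_lev in auto)
  then have e2: "B (mono (lev 0 v)) (mono (lev 0 u)) = KK C d v u" by (simp add: fac_def)
  have "KK C d u v = KK C d v u" using e1 e2 bf_sym[OF bf] by simp
  moreover have "kappa d (\<lambda>j. cnt u j + cnt v j) = kappa d (\<lambda>j. cnt v j + cnt u j)"
    by (simp add: add.commute)
  ultimately show ?thesis unfolding KK_def using kappa_nz[OF dpos] by simp
qed

lemma lev_Cons[simp]: "lev m (j # a) = (j, m) # lev m a"
  by (simp add: lev_def)

lemma lev_Nil[simp]: "lev m [] = []"
  by (simp add: lev_def)

lemma MOVE_L:
  assumes r: "RW C d \<Phi>" and sym: "\<And>a b. int (d a) * C a b = int (d b) * C b a"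
  shows "(\<forall>l\<in>set L. snd l < k) \<Longrightarrow> \<Phi> (mono (A @ L @ [(i, k + 1)] @ R)) =
    qi d i (sum_list (map (\<lambda>l. sgn_pow (k + 1 - snd l + 1) * C i (fst l)) L)) * \<Phi> (mono (A @ [(i, k + 1)] @ L @ R))"
proof (induction L arbitrary: A)
  case Nil
  then show ?case by simp
next
  case (Cons l L)
  obtain j m where l: "l = (j, m)" by (cases l)
  have mk: "m < k" using Cons.prems l by simp
  have "\<Phi> (mono (A @ (l # L) @ [(i, k + 1)] @ R)) = \<Phi> (mono ((A @ [l]) @ L @ [(i, k + 1)] @ R))" by simp
  also have "\<dots> = qi d i (sum_list (map (\<lambda>l. sgn_pow (k + 1 - snd l + 1) * C i (fst l)) L)) * \<Phi> (mono ((A @ [l]) @ [(i, k + 1)] @ L @ R))"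
    using Cons.IH[of "A @ [l]"] Cons.prems by simp
  also have "\<Phi> (mono ((A @ [l]) @ [(i, k + 1)] @ L @ R)) = \<Phi> (mono (A @ [(j, m), (i, k + 1)] @ (L @ R)))"
    using l by simp
  also have "\<dots> = qi d j (sgn_pow (k + 1 - m + 1) * C j i) * \<Phi> (mono (A @ [(i, k + 1), (j, m)] @ (L @ R)))"
    by (rule RW_R1[OF r]) (use mk in simp)
  also have "qi d j (sgn_pow (k + 1 - m + 1) * C j i) = qi d i (sgn_pow (k + 1 - m + 1) * C i j)"
    by (rule qi_sym) (rule sym)
  finally show ?case using l by (simp add: qi_add algebra_simps)
qed

lemma MOVE_H:
  assumes r: "RW C d \<Phi>"
  shows "(\<forall>l\<in>set H. k + 1 < snd l) \<Longrightarrow> \<Phi> (mono (A @ [(i, k)] @ H @ R)) =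
    qi d i (sum_list (map (\<lambda>l. sgn_pow (snd l - k + 1) * C i (fst l)) H)) * \<Phi> (mono (A @ H @ [(i, k)] @ R))"
proof (induction H arbitrary: A)
  case Nil
  then show ?case by simp
next
  case (Cons l H)
  obtain j p where l: "l = (j, p)" by (cases l)
  have kp: "k + 1 < p" using Cons.prems l by simp
  have "\<Phi> (mono (A @ [(i, k)] @ (l # H) @ R)) = \<Phi> (mono (A @ [(i, k), (j, p)] @ (H @ R)))" using l by simp
  also have "\<dots> = qi d i (sgn_pow (p - k + 1) * C i j) * \<Phi> (mono (A @ [(j, p), (i, k)] @ (H @ R)))"
    by (rule RW_R1[OF r kp])
  also have "\<Phi> (mono (A @ [(j, p), (i, k)] @ (H @ R))) = \<Phi> (mono ((A @ [l]) @ [(i, k)] @ H @ R))"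
    using l by simp
  also have "\<dots> = qi d i (sum_list (map (\<lambda>l. sgn_pow (snd l - k + 1) * C i (fst l)) H)) * \<Phi> (mono ((A @ [l]) @ H @ [(i, k)] @ R))"
    using Cons.IH[of "A @ [l]"] Cons.prems by simp
  finally show ?case using l by (simp add: qi_add algebra_simps)
qed

lemma MOVE_b:
  assumes r: "RW C d \<Phi>" and sym: "\<And>a b. int (d a) * C a b = int (d b) * C b a"
  shows "\<Phi> (mono (A @ lev k b @ [(i, k + 1)] @ R)) =
    qi d i (sum_list (map (C i) b)) * \<Phi> (mono (A @ [(i, k + 1)] @ lev k b @ R)) +
    (1 - qi d i 2) * dR C d i 1 (\<lambda>w. \<Phi> (mono (A @ lev k w @ R))) b"
proof (induction b arbitrary: A)
  case Nil
  then show ?case by simp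
next
  case (Cons j b)
  have "\<Phi> (mono (A @ lev k (j # b) @ [(i, k + 1)] @ R)) = \<Phi> (mono ((A @ [(j, k)]) @ lev k b @ [(i, k + 1)] @ R))"
    by simp
  also have "\<dots> = qi d i (sum_list (map (C i) b)) * \<Phi> (mono ((A @ [(j, k)]) @ [(i, k + 1)] @ lev k b @ R)) +
    (1 - qi d i 2) * dR C d i 1 (\<lambda>w. \<Phi> (mono ((A @ [(j, k)]) @ lev k w @ R))) b"
    by (rule Cons.IH)
  also have "\<Phi> (mono ((A @ [(j, k)]) @ [(i, k + 1)] @ lev k b @ R)) = \<Phi> (mono (A @ [(j, k), (i, k + 1)] @ (lev k b @ R)))"
    by simp
  also have "\<dots> = qi d j (C j i) * \<Phi> (mono (A @ [(i, k + 1), (j, k)] @ (lev k b @ R))) +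
        (if j = i then (1 - qi d j 2) * \<Phi> (mono (A @ (lev k b @ R))) else 0)"
    by (rule RW_R2[OF r])
  also have "qi d j (C j i) = qi d i (C i j)"
    using qi_sym[of d j C i 1] sym[of j i] by simp
  finally show ?case
    by (cases "j = i") (simp_all add: qi_add algebra_simps)
qed

lemma MOVE_a:
  assumes r: "RW C d \<Phi>"
  shows "\<Phi> (mono (A @ [(i, k)] @ lev (k + 1) a @ R)) =
    qi d i (sum_list (map (C i) a)) * \<Phi> (mono (A @ lev (k + 1) a @ [(i, k)] @ R)) +
    (1 - qi d i 2) * dL C d i 1 (\<lambda>w. \<Phi> (mono (A @ lev (k + 1) w @ R))) a"
proof (induction a arbitrary: A)
  case Nil
  then show ?case by simp
next
  case (Cons j a)
  have "\<Phi> (mono (A @ [(i, k)] @ lev (k + 1) (j # a) @ R)) = \<Phi> (mono (A @ [(i, k), (j, k + 1)] @ (lev (k + 1) a @ R)))"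
    by simp
  also have "\<dots> = qi d i (C i j) * \<Phi> (mono (A @ [(j, k + 1), (i, k)] @ (lev (k + 1) a @ R))) +
        (if i = j then (1 - qi d i 2) * \<Phi> (mono (A @ (lev (k + 1) a @ R))) else 0)"
    by (rule RW_R2[OF r])
  also have "\<Phi> (mono (A @ [(j, k + 1), (i, k)] @ (lev (k + 1) a @ R))) = \<Phi> (mono ((A @ [(j, k + 1)]) @ [(i, k)] @ lev (k + 1) a @ R))"
    by simp
  also have "\<dots> = qi d i (sum_list (map (C i) a)) * \<Phi> (mono ((A @ [(j, k + 1)]) @ lev (k + 1) a @ [(i, k)] @ R)) +
    (1 - qi d i 2) * dL C d i 1 (\<lambda>w. \<Phi> (mono ((A @ [(j, k + 1)]) @ lev (k + 1) w @ R))) a"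
    by (rule Cons.IH)
  finally show ?case
    by (cases "j = i") (simp_all add: qi_add algebra_simps)
qed

lemma ordw_append: "ordw (x @ y) \<longleftrightarrow> ordw x \<and> ordw y \<and> (\<forall>l\<in>set x. \<forall>l'\<in>set y. snd l' \<le> snd l)"
  unfolding ordw_def by (simp add: sorted_wrt_append)

lemma set_lev: "l \<in> set (lev m a) \<Longrightarrow> snd l = m"
  unfolding lev_def by auto

definition Rst :: "('i \<Rightarrow> 'i \<Rightarrow> int) \<Rightarrow> ('i::finite \<Rightarrow> nat) \<Rightarrow> ('i \<times> int) list \<Rightarrow> ('i \<times> int) list \<Rightarrow> ('i \<times> int) list \<Rightarrow> ('i \<times> int) list \<Rightarrow> K" where
  "Rst C d H L H' L' = (\<Prod>m\<in>snd ` set (H @ L @ H' @ L'). fac C d m (H @ L) (H' @ L'))"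

lemma blk_append: "blk m (x @ y) = blk m x @ blk m y"
  unfolding blk_def by simp

lemma blk_empty: "(\<forall>l\<in>set x. snd l \<noteq> m) \<Longrightarrow> blk m x = []"
  unfolding blk_def by (simp add: filter_empty_conv)

lemma FACT:
  assumes bf: "bosonic_form C d B"
    and o: "ordw H" "ordw L" "ordw H'" "ordw L'"
    and lv: "\<forall>l\<in>set H. k + 1 < snd l" "\<forall>l\<in>set L. snd l < k" "\<forall>l\<in>set H'. k + 1 < snd l" "\<forall>l\<in>set L'. snd l < k"
  shows "B (mono (H @ lev (k + 1) a @ lev k b @ L)) (mono (H' @ lev (k + 1) a' @ lev k b' @ L'))
       = Rst C d H L H' L' * KK C d a a' * KK C d b b'"
proof -
  define T where "T = snd ` set (H @ L @ H' @ L')"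
  have fT: "finite T" unfolding T_def by simp
  have kT: "k \<notin> T" "k + 1 \<notin> T" unfolding T_def using lv by fastforce+
  have ordP: "\<And>H L a b. ordw H \<Longrightarrow> ordw L \<Longrightarrow> \<forall>l\<in>set H. k + 1 < snd l \<Longrightarrow> \<forall>l\<in>set L. snd l < k \<Longrightarrow>
      ordw (H @ lev (k + 1) a @ lev k b @ L)"
    unfolding ordw_append by (auto dest!: set_lev) (fastforce+)
  have "B (mono (H @ lev (k + 1) a @ lev k b @ L)) (mono (H' @ lev (k + 1) a' @ lev k b' @ L'))
      = (\<Prod>m\<in>insert (k + 1) (insert k T). fac C d m (H @ lev (k + 1) a @ lev k b @ L) (H' @ lev (k + 1) a' @ lev k b' @ L'))"
    by (rule ORD_B[OF bf ordP[OF o(1,2) lv(1,2)] ordP[OF o(3,4) lv(3,4)]]) (auto simp: T_def dest!: set_lev)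
  also have "\<dots> = fac C d (k + 1) (H @ lev (k + 1) a @ lev k b @ L) (H' @ lev (k + 1) a' @ lev k b' @ L') *
                  (fac C d k (H @ lev (k + 1) a @ lev k b @ L) (H' @ lev (k + 1) a' @ lev k b' @ L') *
                  (\<Prod>m\<in>T. fac C d m (H @ lev (k + 1) a @ lev k b @ L) (H' @ lev (k + 1) a' @ lev k b' @ L')))"
    using fT kT by simp
  also have "fac C d (k + 1) (H @ lev (k + 1) a @ lev k b @ L) (H' @ lev (k + 1) a' @ lev k b' @ L') = KK C d a a'"
  proof -
    have "blk (k + 1) H = []" "blk (k + 1) L = []" "blk (k + 1) H' = []" "blk (k + 1) L' = []"
      using lv by (auto intro!: blk_empty)
    then show ?thesis unfolding fac_def by (simp add: blk_append)
  qed
  also have "fac C d k (H @ lev (k + 1) a @ lev k b @ L) (H' @ lev (k + 1) a' @ lev k b' @ L') = KK C d b b'"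
  proof -
    have "blk k H = []" "blk k L = []" "blk k H' = []" "blk k L' = []"
      using lv by (auto intro!: blk_empty)
    then show ?thesis unfolding fac_def by (simp add: blk_append)
  qed
  also have "(\<Prod>m\<in>T. fac C d m (H @ lev (k + 1) a @ lev k b @ L) (H' @ lev (k + 1) a' @ lev k b' @ L')) = Rst C d H L H' L'"
    unfolding Rst_def T_def[symmetric]
  proof (rule prod.cong[OF refl])
    fix m assume "m \<in> T"
    then have "m \<noteq> k" "m \<noteq> k + 1" using kT by auto
    then show "fac C d m (H @ lev (k + 1) a @ lev k b @ L) (H' @ lev (k + 1) a' @ lev k b' @ L') = fac C d m (H @ L) (H' @ L')"
      unfolding fac_def by (simp add: blk_append)
  qed
  finally show ?thesis by (simp add: algebra_simps)
qed

lemma count_blk: "count (mset H) (j, m) = count (mset (map fst (blk m H))) j"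
  unfolding count_map_fst blk_def by (induction H) auto

lemma KK_nz: "KK C d a b \<noteq> 0 \<Longrightarrow> mset a = mset b"
  unfolding KK_def using Lw_mset by fastforce

lemma Rst_nz:
  assumes nz: "Rst C d H L H' L' \<noteq> 0"
    and lv: "\<forall>l\<in>set H. k + 1 < snd l" "\<forall>l\<in>set L. snd l < k" "\<forall>l\<in>set H'. k + 1 < snd l" "\<forall>l\<in>set L'. snd l < k"
  shows "mset H = mset H'"
proof (rule multiset_eqI)
  fix x :: "'a \<times> int"
  obtain j m where x: "x = (j, m)" by (cases x)
  show "count (mset H) x = count (mset H') x"
  proof (cases "k + 1 < m")
    case False
    then have "blk m H = []" "blk m H' = []" using lv by (auto intro!: blk_empty)
    then show ?thesis unfolding x count_blk by simp
  next
    case True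
    then have bl: "blk m L = []" "blk m L' = []" using lv by (auto intro!: blk_empty)
    show ?thesis
    proof (cases "m \<in> snd ` set (H @ L @ H' @ L')")
      case False
      then have "blk m H = []" "blk m H' = []" by (auto intro!: blk_empty)
      then show ?thesis unfolding x count_blk by simp
    next
      case mem: True
      have "fac C d m (H @ L) (H' @ L') \<noteq> 0"
        using nz mem unfolding Rst_def by auto
      then have "mset (map fst (blk m (H @ L))) = mset (map fst (blk m (H' @ L')))"
        unfolding fac_def by (rule KK_nz)
      then show ?thesis unfolding x count_blk using bl by (simp add: blk_append)
    qed
  qed
qed

lemma cnt_snoc: "cnt (a @ [i]) = (\<lambda>j. cnt a j + (if j = i then 1 else 0))"
  unfolding cnt_def by auto

lemma cnt_Cons: "cnt (i # a) = (\<lambda>j. cnt a j + (if j = i then 1 else 0))"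
  unfolding cnt_def by auto

lemma cnt_mset: "mset (i # w) = mset v \<Longrightarrow> cnt v = (\<lambda>j. cnt w j + (if j = i then 1 else 0))"
  unfolding cnt_def by (metis cnt_Cons cnt_def)

lemma kappa_inv_shift:
  assumes "\<forall>j. d j > 0" "mset (i # w) = mset v"
  shows "kappa d (\<lambda>j. cnt a j + cnt w j) = kappa d (\<lambda>j. cnt a j + cnt v j) * inverse (kappa_i d i)"
proof -
  have "kappa d (\<lambda>j. cnt a j + cnt v j) = kappa d (\<lambda>j. (cnt a j + cnt w j) + (if j = i then 1 else 0))"
    using cnt_mset[OF assms(2)] by (simp add: add.assoc)
  also have "\<dots> = kappa d (\<lambda>j. cnt a j + cnt w j) * kappa_i d i" by (rule kappa_add1)
  finally have e: "kappa d (\<lambda>j. cnt a j + cnt v j) = kappa d (\<lambda>j. cnt a j + cnt w j) * kappa_i d i" .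
  have "kappa_i d i \<noteq> 0" using assms(1) by (simp add: kappa_i_nz)
  then show ?thesis unfolding e by simp
qed

lemma KK_snoc:
  assumes sym: "\<And>a b. int (d a) * C a b = int (d b) * C b a"
  shows "KK C d (a @ [i]) a' = kappa d (\<lambda>j. cnt a j + cnt a' j) * kappa_i d i * inverse (1 - qi d i 2) * dR C d i (-1) (Lw C d a) a'"
proof -
  have "kappa d (\<lambda>j. cnt (a @ [i]) j + cnt a' j) = kappa d (\<lambda>j. (cnt a j + cnt a' j) + (if j = i then 1 else 0))"
    unfolding cnt_snoc by (simp add: algebra_simps)
  then show ?thesis unfolding KK_def Lw_snoc[OF sym] kappa_add1 by simp
qed

lemma dL_KK:
  assumes cii: "C i i = 2" and dpos: "\<forall>j. d j > 0"
  shows "dL C d i 1 (KK C d a) a' = qi d i (sum_list (map (C i) a') - 2) * kappa d (\<lambda>j. cnt a j + cnt a' j) * inverse (kappa_i d i) * dR C d i (-1) (Lw C d a) a'"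
proof -
  have "dL C d i 1 (KK C d a) a' = qi d i (sum_list (map (C i) a') - 2) * dR C d i (-1) (KK C d a) a'"
    using dLR[of C i d 1 "KK C d a" a', OF cii] by simp
  also have "dR C d i (-1) (KK C d a) a' = dR C d i (-1) (\<lambda>w. (kappa d (\<lambda>j. cnt a j + cnt a' j) * inverse (kappa_i d i)) * Lw C d a w) a'"
  proof (rule dR_cong)
    fix w assume "mset (i # w) = mset a'"
    then show "KK C d a w = kappa d (\<lambda>j. cnt a j + cnt a' j) * inverse (kappa_i d i) * Lw C d a w"
      unfolding KK_def using kappa_inv_shift[OF dpos] by simp
  qed
  finally show ?thesis by (simp add: dR_cmult mult.assoc)
qed

lemma KK_cons2:
  assumes bf: "bosonic_form C d B" and dpos: "\<forall>j. d j > 0"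
  shows "KK C d b (i # b') = kappa d (\<lambda>j. cnt b j + cnt b' j) * kappa_i d i * inverse (1 - qi d i 2) * dL C d i (-1) (Lw C d b') b"
proof -
  have "kappa d (\<lambda>j. cnt b j + cnt (i # b') j) = kappa d (\<lambda>j. (cnt b j + cnt b' j) + (if j = i then 1 else 0))"
    unfolding cnt_Cons by (simp add: algebra_simps)
  moreover have "Lw C d b (i # b') = Lw C d (i # b') b" by (rule Lw_sym[OF bf dpos])
  ultimately show ?thesis unfolding KK_def Lw_Cons kappa_add1 by simp
qed

lemma dR_KK:
  assumes bf: "bosonic_form C d B" and cii: "C i i = 2" and dpos: "\<forall>j. d j > 0"
  shows "dR C d i 1 (\<lambda>w. KK C d w b') b = qi d i (sum_list (map (C i) b) - 2) * kappa d (\<lambda>j. cnt b j + cnt b' j) * inverse (kappa_i d i) * dL C d i (-1) (Lw C d b') b"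
proof -
  have "dL C d i (-1) (\<lambda>w. KK C d w b') b = qi d i (- (sum_list (map (C i) b) - 2)) * dR C d i 1 (\<lambda>w. KK C d w b') b"
    using dLR[of C i d "-1" "\<lambda>w. KK C d w b'" b, OF cii] by simp
  then have e: "dR C d i 1 (\<lambda>w. KK C d w b') b = qi d i (sum_list (map (C i) b) - 2) * dL C d i (-1) (\<lambda>w. KK C d w b') b"
    by (simp add: qi_add[symmetric])
  also have "dL C d i (-1) (\<lambda>w. KK C d w b') b = dL C d i (-1) (\<lambda>w. (kappa d (\<lambda>j. cnt b j + cnt b' j) * inverse (kappa_i d i)) * Lw C d b' w) b"
  proof (rule dL_cong)
    fix w assume m: "mset (i # w) = mset b"
    have "kappa d (\<lambda>j. cnt w j + cnt b' j) = kappa d (\<lambda>j. cnt b' j + cnt w j)" by (simp add: add.commute)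
    also have "\<dots> = kappa d (\<lambda>j. cnt b' j + cnt b j) * inverse (kappa_i d i)" by (rule kappa_inv_shift[OF dpos m])
    also have "kappa d (\<lambda>j. cnt b' j + cnt b j) = kappa d (\<lambda>j. cnt b j + cnt b' j)" by (simp add: add.commute)
    finally show "KK C d w b' = kappa d (\<lambda>j. cnt b j + cnt b' j) * inverse (kappa_i d i) * Lw C d b' w"
      unfolding KK_def using Lw_sym[OF bf dpos, of w b'] by simp
  qed
  finally show ?thesis by (simp add: dL_cmult mult.assoc)
qed

lemma sgn_pow_add: "sgn_pow (a + b) = sgn_pow a * sgn_pow b"
  unfolding sgn_pow_def by auto

lemma sgn_pow_uminus: "sgn_pow (- a) = sgn_pow a"
  unfolding sgn_pow_def by auto

lemma sgn_pow_sq: "sgn_pow a * sgn_pow a = 1"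
  unfolding sgn_pow_def by auto

lemma sgn_pow_1: "sgn_pow 1 = -1" and sgn_pow_0: "sgn_pow 0 = 1" and sgn_pow_2: "sgn_pow 2 = 1"
  unfolding sgn_pow_def by auto

lemma sgn_pow_L: "sgn_pow (k + 1 - m + 1) = - (sgn_pow k * sgn_pow (m + 1))"
  unfolding sgn_pow_def by auto

lemma sgn_pow_H: "sgn_pow (p - k + 1) = sgn_pow k * sgn_pow (p + 1)"
  unfolding sgn_pow_def by auto

definition hw :: "('i \<Rightarrow> 'i \<Rightarrow> int) \<Rightarrow> 'i \<Rightarrow> ('i \<times> int) list \<Rightarrow> int" where
  "hw C i Y = sum_list (map (\<lambda>l. sgn_pow (snd l + 1) * C i (fst l)) Y)"

lemma hpair_wtw: "hpair C i (wtw Y) = hw C i Y"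
proof (induction Y)
  case Nil
  then show ?case by (simp add: hpair_def wtw_def hw_def)
next
  case (Cons l Y)
  have "hpair C i (wtw (l # Y)) = (\<Sum>j\<in>UNIV. C i j * (if fst l = j then sgn_pow (snd l + 1) else 0)) + hpair C i (wtw Y)"
    unfolding hpair_def wtw_Cons by (simp add: distrib_left sum.distrib)
  also have "(\<Sum>j\<in>UNIV. C i j * (if fst l = j then sgn_pow (snd l + 1) else 0)) = C i (fst l) * sgn_pow (snd l + 1)"
  proof -
    have "(\<Sum>j\<in>UNIV. C i j * (if fst l = j then sgn_pow (snd l + 1) else 0)) = (\<Sum>j\<in>UNIV. if fst l = j then C i j * sgn_pow (snd l + 1) else 0)"
      by (rule sum.cong) auto
    also have "\<dots> = C i (fst l) * sgn_pow (snd l + 1)" by (simp add: sum.delta')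
    finally show ?thesis .
  qed
  finally show ?case using Cons by (simp add: hw_def)
qed

lemma hw_append: "hw C i (x @ y) = hw C i x + hw C i y"
  unfolding hw_def by simp

lemma hw_lev: "hw C i (lev m a) = sgn_pow (m + 1) * sum_list (map (C i) a)"
  unfolding hw_def lev_def by (induction a) (auto simp: algebra_simps)

lemma sig_L: "sum_list (map (\<lambda>l. sgn_pow (k + 1 - snd l + 1) * C i (fst l)) L) = - (sgn_pow k * hw C i L)"
  unfolding hw_def sgn_pow_L by (induction L) (auto simp: algebra_simps)

lemma tau_H: "sum_list (map (\<lambda>l. sgn_pow (snd l - k + 1) * C i (fst l)) H) = sgn_pow k * hw C i H"
  unfolding hw_def sgn_pow_H by (induction H) (auto simp: algebra_simps)

lemma hw_mset: "mset H = mset H' \<Longrightarrow> hw C i H = hw C i H'"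
  unfolding hw_def by (rule sum_list_mset)

lemma lev_blk: "lev m (map fst (blk m x)) = blk m x"
  unfolding lev_def blk_def by (induction x) auto

lemma DECOMP:
  assumes "ordw x"
  shows "x = filter (\<lambda>l. k + 1 < snd l) x @ lev (k + 1) (map fst (blk (k + 1) x)) @ lev k (map fst (blk k x)) @ filter (\<lambda>l. snd l < k) x"
proof -
  have "x = filter (\<lambda>l. k + 1 < snd l \<or> (snd l = k + 1 \<or> (snd l = k \<or> snd l < k))) x"
    by (rule filter_True[symmetric]) auto
  also have "\<dots> = filter (\<lambda>l. k + 1 < snd l) x @ filter (\<lambda>l. snd l = k + 1 \<or> (snd l = k \<or> snd l < k)) x"
    by (rule filter_split[OF assms]) auto
  also have "filter (\<lambda>l. snd l = k + 1 \<or> (snd l = k \<or> snd l < k)) x = filter (\<lambda>l. snd l = k + 1) x @ filter (\<lambda>l. snd l = k \<or> snd l < k) x"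
    by (rule filter_split[OF assms]) auto
  also have "filter (\<lambda>l. snd l = k \<or> snd l < k) x = filter (\<lambda>l. snd l = k) x @ filter (\<lambda>l. snd l < k) x"
    by (rule filter_split[OF assms]) auto
  finally show ?thesis unfolding lev_blk by (simp add: blk_def)
qed

lemma ordw_filter: "ordw x \<Longrightarrow> ordw (filter P x)"
  unfolding ordw_def by (rule sorted_wrt_filter)

lemma scA:
  fixes x y \<kappa> Q :: K
  assumes "\<kappa> \<noteq> 0" "Q \<noteq> 0" "x \<noteq> 0" "\<kappa>^2 = inverse x * Q^2"
  shows "y * x * \<kappa> * inverse Q = y * Q * inverse \<kappa>"
proof -
  have h: "x * (\<kappa> * \<kappa>) = Q * Q" using assms(3,4) by (simp add: power2_eq_square)
  have "x * \<kappa> * inverse Q = (x * (\<kappa> * \<kappa>)) * inverse Q * inverse \<kappa>"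
    using assms(1) by (simp add: field_simps)
  also have "\<dots> = Q * inverse \<kappa>" unfolding h using assms(2) by simp
  finally show ?thesis by (metis mult.assoc)
qed

lemma scB:
  fixes x y \<kappa> Q :: K
  assumes "\<kappa> \<noteq> 0" "Q \<noteq> 0" "x \<noteq> 0" "\<kappa>^2 = inverse x * Q^2"
  shows "y * inverse x * Q * inverse \<kappa> = y * \<kappa> * inverse Q"
proof -
  have h: "\<kappa> * \<kappa> = inverse x * (Q * Q)" using assms(4) by (simp add: power2_eq_square)
  have "\<kappa> * inverse Q = (\<kappa> * \<kappa>) * inverse Q * inverse \<kappa>"
    using assms(1) by (simp add: field_simps)
  also have "\<dots> = inverse x * Q * inverse \<kappa>" unfolding h using assms(2) by (simp add: field_simps)
  finally show ?thesis by (metis mult.assoc)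
qed

lemma lev_append: "lev m (a @ b) = lev m a @ lev m b"
  unfolding lev_def by simp

lemma CORE:
  fixes C :: "'i::finite \<Rightarrow> 'i \<Rightarrow> int" and d :: "'i \<Rightarrow> nat"
    and B :: "(('i \<times> int) list \<Rightarrow> K) \<Rightarrow> (('i \<times> int) list \<Rightarrow> K) \<Rightarrow> K"
    and i :: 'i and k :: int and x z :: "('i \<times> int) list"
  assumes fc: "finite_cartan C d" and bf: "bosonic_form C d B" and ox: "ordw x" and oz: "ordw z"
  shows "qi d i (sgn_pow k * hpair C i (wtw x) + 1) * B (mono (x @ [(i, k + 1)])) (mono z)
         = B (mono x) (mono ((i, k) # z))"
proof -
  have cii: "C i i = 2" and dpos: "\<forall>j. d j > 0" and sym: "\<And>a b. int (d a) * C a b = int (d b) * C b a"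
    using fc unfolding finite_cartan_def by auto
  define H where "H = filter (\<lambda>l. k + 1 < snd l) x"
  define a where "a = map fst (blk (k + 1) x)"
  define b where "b = map fst (blk k x)"
  define L where "L = filter (\<lambda>l. snd l < k) x"
  define H' where "H' = filter (\<lambda>l. k + 1 < snd l) z"
  define a' where "a' = map fst (blk (k + 1) z)"
  define b' where "b' = map fst (blk k z)"
  define L' where "L' = filter (\<lambda>l. snd l < k) z"
  have xd: "x = H @ lev (k + 1) a @ lev k b @ L" unfolding H_def a_def b_def L_def by (rule DECOMP[OF ox])
  have zd: "z = H' @ lev (k + 1) a' @ lev k b' @ L'" unfolding H'_def a'_def b'_def L'_def by (rule DECOMP[OF oz])
  have oH: "ordw H" "ordw L" "ordw H'" "ordw L'"
    unfolding H_def L_def H'_def L'_def using ox oz by (simp_all add: ordw_filter)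
  have lv: "\<forall>l\<in>set H. k + 1 < snd l" "\<forall>l\<in>set L. snd l < k" "\<forall>l\<in>set H'. k + 1 < snd l" "\<forall>l\<in>set L'. snd l < k"
    unfolding H_def L_def H'_def L'_def by simp_all
  define R0 where "R0 = Rst C d H L H' L'"
  have F: "\<And>a1 b1. B (mono (H @ lev (k + 1) a1 @ lev k b1 @ L)) (mono z) = R0 * KK C d a1 a' * KK C d b1 b'"
    unfolding R0_def by (subst zd) (rule FACT[OF bf oH lv])
  have G: "\<And>a2 b2. B (mono x) (mono (H' @ lev (k + 1) a2 @ lev k b2 @ L')) = R0 * KK C d a a2 * KK C d b b2"
    unfolding R0_def by (subst xd) (rule FACT[OF bf oH lv])
  have rP: "RW C d (\<lambda>y. B y (mono z))" by (rule RW_B_left[OF bf]) simp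
  have rQ: "RW C d (\<lambda>y. B (mono x) y)" by (rule RW_B_right[OF bf]) simp
  define \<sigma> where "\<sigma> = sum_list (map (\<lambda>l. sgn_pow (k + 1 - snd l + 1) * C i (fst l)) L)"
  define \<tau> where "\<tau> = sum_list (map (\<lambda>l. sgn_pow (snd l - k + 1) * C i (fst l)) H')"
  define Sa where "Sa = sum_list (map (C i) a)"
  define Sb where "Sb = sum_list (map (C i) b)"
  define Sa' where "Sa' = sum_list (map (C i) a')"
  define Q where "Q = 1 - qi d i 2"
  define \<kappa> where "\<kappa> = kappa_i d i"
  have L1: "B (mono (x @ [(i, k + 1)])) (mono z) = qi d i \<sigma> * B (mono (H @ lev (k + 1) a @ lev k b @ [(i, k + 1)] @ L)) (mono z)"
    using MOVE_L[OF rP sym, where L = L and A = "H @ lev (k + 1) a @ lev k b" and R = "[]" and i = i and k = k] lv(2)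
    unfolding \<sigma>_def by (simp add: xd)
  have L2: "B (mono (H @ lev (k + 1) a @ lev k b @ [(i, k + 1)] @ L)) (mono z) =
      qi d i Sb * B (mono (H @ lev (k + 1) (a @ [i]) @ lev k b @ L)) (mono z) +
      Q * dR C d i 1 (\<lambda>w. B (mono (H @ lev (k + 1) a @ lev k w @ L)) (mono z)) b"
    using MOVE_b[OF rP sym, where A = "H @ lev (k + 1) a" and k = k and b = b and i = i and R = L]
    unfolding Sb_def Q_def by (simp add: lev_append)
  have R1: "B (mono x) (mono ((i, k) # z)) = qi d i \<tau> * B (mono x) (mono (H' @ [(i, k)] @ lev (k + 1) a' @ lev k b' @ L'))"
    using MOVE_H[OF rQ, where H = H' and A = "[]" and R = "lev (k + 1) a' @ lev k b' @ L'" and i = i and k = k] lv(3)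
    unfolding \<tau>_def by (simp add: zd)
  have R2: "B (mono x) (mono (H' @ [(i, k)] @ lev (k + 1) a' @ lev k b' @ L')) =
      qi d i Sa' * B (mono x) (mono (H' @ lev (k + 1) a' @ lev k (i # b') @ L')) +
      Q * dL C d i 1 (\<lambda>w. B (mono x) (mono (H' @ lev (k + 1) w @ lev k b' @ L'))) a'"
    using MOVE_a[OF rQ, where A = H' and R = "lev k b' @ L'" and a = a' and i = i and k = k]
    unfolding Sa'_def Q_def by simp
  have DR: "dR C d i 1 (\<lambda>w. B (mono (H @ lev (k + 1) a @ lev k w @ L)) (mono z)) b
      = (R0 * KK C d a a') * dR C d i 1 (\<lambda>w. KK C d w b') b"
    unfolding F by (simp add: dR_cmult[symmetric] mult.assoc)
  have DL: "dL C d i 1 (\<lambda>w. B (mono x) (mono (H' @ lev (k + 1) w @ lev k b' @ L'))) a'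
      = (R0 * KK C d b b') * dL C d i 1 (KK C d a) a'"
  proof -
    have "(\<lambda>w. B (mono x) (mono (H' @ lev (k + 1) w @ lev k b' @ L'))) = (\<lambda>w. (R0 * KK C d b b') * KK C d a w)"
      unfolding G by (simp add: fun_eq_iff algebra_simps)
    then show ?thesis by (simp add: dL_cmult)
  qed
  define Z where "Z = kappa d (\<lambda>j. cnt a j + cnt a' j)"
  define Z' where "Z' = kappa d (\<lambda>j. cnt b j + cnt b' j)"
  define D where "D = dR C d i (-1) (Lw C d a) a'"
  define E where "E = dL C d i (-1) (Lw C d b') b"
  have K1: "KK C d (a @ [i]) a' = Z * \<kappa> * inverse Q * D"
    unfolding Z_def \<kappa>_def Q_def D_def by (rule KK_snoc[OF sym])
  have K2: "KK C d b (i # b') = Z' * \<kappa> * inverse Q * E"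
    unfolding Z'_def \<kappa>_def Q_def E_def by (rule KK_cons2[OF bf dpos])
  have K3: "dL C d i 1 (KK C d a) a' = qi d i (Sa' - 2) * Z * inverse \<kappa> * D"
    unfolding Z_def \<kappa>_def Sa'_def D_def by (rule dL_KK[where C=C and i=i and d=d, OF cii dpos])
  have K4: "dR C d i 1 (\<lambda>w. KK C d w b') b = qi d i (Sb - 2) * Z' * inverse \<kappa> * E"
    unfolding Z'_def \<kappa>_def Sb_def E_def by (rule dR_KK[where C=C and i=i and d=d, OF bf cii dpos])
  define c where "c = qi d i (sgn_pow k * hpair C i (wtw x) + 1)"
  have LHS: "c * B (mono (x @ [(i, k + 1)])) (mono z) =
     c * (qi d i \<sigma> * (qi d i Sb * (R0 * (Z * \<kappa> * inverse Q * D) * KK C d b b') +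
          Q * ((R0 * KK C d a a') * (qi d i (Sb - 2) * Z' * inverse \<kappa> * E))))"
    unfolding L1 L2 DR unfolding F K1 K4 by simp
  have RHS: "B (mono x) (mono ((i, k) # z)) =
     qi d i \<tau> * (qi d i Sa' * (R0 * KK C d a a' * (Z' * \<kappa> * inverse Q * E)) +
          Q * ((R0 * KK C d b b') * (qi d i (Sa' - 2) * Z * inverse \<kappa> * D)))"
    unfolding R1 R2 DL unfolding G K2 K3 by simp
  have nzk: "\<kappa> \<noteq> 0" unfolding \<kappa>_def using dpos by (simp add: kappa_i_nz)
  have nzQ: "Q \<noteq> 0" unfolding Q_def using one_minus_q2_nz[of d i] dpos by simp
  have nzx: "qi d i 1 \<noteq> 0" by (rule qi_nz)
  have ksq: "\<kappa>^2 = inverse (qi d i 1) * Q^2"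
    unfolding \<kappa>_def Q_def kappa_i_sq qi_minus by simp
  have s2: "sgn_pow (k + 1 + 1) = sgn_pow k" unfolding sgn_pow_def by auto
  have s1: "sgn_pow (k + 1) = - sgn_pow k" unfolding sgn_pow_def by auto
  have s2': "sgn_pow (2 + k) = sgn_pow k" "sgn_pow (1 + k) = - sgn_pow k" unfolding sgn_pow_def by auto
  have ss: "\<And>t. sgn_pow k * (sgn_pow k * t) = t" using sgn_pow_sq[of k] by (metis mult.assoc mult_1)
  have hx: "hpair C i (wtw x) = hw C i H + sgn_pow k * Sa - sgn_pow k * Sb + hw C i L"
    unfolding hpair_wtw Sa_def Sb_def by (subst xd) (simp add: hw_append hw_lev s2 s1 s2')
  have \<sigma>e: "\<sigma> = - (sgn_pow k * hw C i L)" unfolding \<sigma>_def by (rule sig_L)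
  have \<tau>e: "\<tau> = sgn_pow k * hw C i H'" unfolding \<tau>_def by (rule tau_H)
  have cexp: "sgn_pow k * hpair C i (wtw x) + 1 + \<sigma> = sgn_pow k * hw C i H + Sa - Sb + 1"
    unfolding hx \<sigma>e by (simp add: algebra_simps ss sgn_pow_sq)
  have A: "c * (qi d i \<sigma> * (qi d i Sb * (R0 * (Z * \<kappa> * inverse Q * D) * KK C d b b'))) =
      qi d i \<tau> * (Q * ((R0 * KK C d b b') * (qi d i (Sa' - 2) * Z * inverse \<kappa> * D)))"
  proof (cases "R0 = 0 \<or> D = 0")
    case True
    then show ?thesis by auto
  next
    case False
    then have R0nz: "R0 \<noteq> 0" and Dnz: "D \<noteq> 0" by auto
    have hH: "hw C i H = hw C i H'"
      using Rst_nz[OF R0nz[unfolded R0_def] lv] by (rule hw_mset)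
    obtain w where w: "mset (i # w) = mset a'" "Lw C d a w \<noteq> 0"
      using dR_nz[OF Dnz[unfolded D_def]] by blast
    have "mset (i # a) = mset a'" using w Lw_mset[OF w(2)] by simp
    then have "sum_list (map (C i) (i # a)) = Sa'" unfolding Sa'_def by (rule sum_list_mset)
    then have SaE: "Sa' = 2 + Sa" using cii unfolding Sa_def by simp
    have ex: "(sgn_pow k * hpair C i (wtw x) + 1 + \<sigma>) + Sb = (\<tau> + (Sa' - 2)) + 1"
      unfolding cexp \<tau>e SaE hH by simp
    have qq: "c * qi d i \<sigma> * qi d i Sb = qi d i \<tau> * qi d i (Sa' - 2) * qi d i 1"
      unfolding c_def using ex by (metis qi_add)
    have "c * (qi d i \<sigma> * (qi d i Sb * (R0 * (Z * \<kappa> * inverse Q * D) * KK C d b b'))) =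
        ((c * qi d i \<sigma> * qi d i Sb) * (R0 * Z * D * KK C d b b')) * \<kappa> * inverse Q"
      by (simp add: mult_ac)
    also have "\<dots> = (qi d i \<tau> * qi d i (Sa' - 2) * (R0 * Z * D * KK C d b b')) * qi d i 1 * \<kappa> * inverse Q"
      unfolding qq by (simp add: mult_ac)
    also have "\<dots> = (qi d i \<tau> * qi d i (Sa' - 2) * (R0 * Z * D * KK C d b b')) * Q * inverse \<kappa>"
      by (rule scA[OF nzk nzQ nzx ksq])
    also have "\<dots> = qi d i \<tau> * (Q * ((R0 * KK C d b b') * (qi d i (Sa' - 2) * Z * inverse \<kappa> * D)))"
      by (simp add: mult_ac)
    finally show ?thesis .
  qed
  have B: "c * (qi d i \<sigma> * (Q * ((R0 * KK C d a a') * (qi d i (Sb - 2) * Z' * inverse \<kappa> * E)))) =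
      qi d i \<tau> * (qi d i Sa' * (R0 * KK C d a a' * (Z' * \<kappa> * inverse Q * E)))"
  proof (cases "R0 = 0 \<or> KK C d a a' = 0")
    case True
    then show ?thesis by auto
  next
    case False
    then have R0nz: "R0 \<noteq> 0" and Knz: "KK C d a a' \<noteq> 0" by auto
    have hH: "hw C i H = hw C i H'"
      using Rst_nz[OF R0nz[unfolded R0_def] lv] by (rule hw_mset)
    have "Sa = Sa'" unfolding Sa_def Sa'_def using KK_nz[OF Knz] by (rule sum_list_mset)
    then have ex: "(sgn_pow k * hpair C i (wtw x) + 1 + \<sigma>) + (Sb - 2) = (\<tau> + Sa') + (- 1)"
      unfolding cexp \<tau>e hH by simp
    have qq: "c * qi d i \<sigma> * qi d i (Sb - 2) = qi d i \<tau> * qi d i Sa' * inverse (qi d i 1)"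
      unfolding c_def qi_minus[symmetric] using ex by (metis qi_add)
    have "c * (qi d i \<sigma> * (Q * ((R0 * KK C d a a') * (qi d i (Sb - 2) * Z' * inverse \<kappa> * E)))) =
        ((c * qi d i \<sigma> * qi d i (Sb - 2)) * (R0 * KK C d a a' * Z' * E)) * Q * inverse \<kappa>"
      by (simp add: mult_ac)
    also have "\<dots> = (qi d i \<tau> * qi d i Sa' * (R0 * KK C d a a' * Z' * E)) * inverse (qi d i 1) * Q * inverse \<kappa>"
      unfolding qq by (simp add: mult_ac)
    also have "\<dots> = (qi d i \<tau> * qi d i Sa' * (R0 * KK C d a a' * Z' * E)) * \<kappa> * inverse Q"
      by (rule scB[OF nzk nzQ nzx ksq])
    also have "\<dots> = qi d i \<tau> * (qi d i Sa' * (R0 * KK C d a a' * (Z' * \<kappa> * inverse Q * E)))"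
      by (simp add: mult_ac)
    finally show ?thesis .
  qed
  show ?thesis
    unfolding c_def[symmetric] LHS RHS distrib_left A B by (simp add: add.commute)
qed

lemma wtw_mset: "mset x = mset z \<Longrightarrow> wtw x = wtw z"
  unfolding wtw_def by (rule ext, rule sum_list_mset)

lemma ORTH_ord:
  assumes bf: "bosonic_form C d B" and ox: "ordw x" and oz: "ordw z"
    and nz: "B (mono x) (mono z) \<noteq> 0"
  shows "wtw x = wtw z"
proof -
  define S where "S = snd ` set x \<union> snd ` set z"
  have "B (mono x) (mono z) = (\<Prod>m\<in>S. fac C d m x z)"
    by (rule ORD_B[OF bf ox oz]) (auto simp: S_def)
  then have fnz: "\<And>m. m \<in> S \<Longrightarrow> fac C d m x z \<noteq> 0" using nz unfolding S_def by auto
  have "mset x = mset z"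
  proof (rule multiset_eqI)
    fix l :: "'a \<times> int"
    obtain j m where l: "l = (j, m)" by (cases l)
    show "count (mset x) l = count (mset z) l"
    proof (cases "m \<in> S")
      case True
      then have "mset (map fst (blk m x)) = mset (map fst (blk m z))"
        using fnz unfolding fac_def by (blast intro: KK_nz)
      then show ?thesis unfolding l count_blk by simp
    next
      case False
      then have "blk m x = []" "blk m z = []" unfolding S_def by (auto intro!: blk_empty)
      then show ?thesis unfolding l count_blk by simp
    qed
  qed
  then show ?thesis by (rule wtw_mset)
qed

lemma OSw_supp: "OSw \<beta> y \<Longrightarrow> supp_fin y" unfolding OSw_def by blast
lemma OSw_words: "OSw \<beta> y \<Longrightarrow> y w \<noteq> 0 \<Longrightarrow> ordw w \<and> wtw w = \<beta>" unfolding OSw_def by blast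

lemma ORTH:
  assumes bf: "bosonic_form C d B" and oz: "ordw z"
    and nz: "B (mono w) (mono z) \<noteq> 0"
  shows "wtw w = wtw z"
proof -
  obtain y where y: "OSw (wtw w) y" "\<forall>\<Phi>. RW C d \<Phi> \<longrightarrow> \<Phi> (mono w) = \<Phi> y"
    using straighten by blast
  have r: "RW C d (\<lambda>y. B y (mono z))" by (rule RW_B_left[OF bf]) simp
  have "B (mono w) (mono z) = B y (mono z)" using y(2) r by blast
  also have "\<dots> = (\<Sum>w'\<in>{w'. y w' \<noteq> 0}. y w' * B (mono w') (mono z))"
    by (rule lin_expand[OF RW_lin[OF r] OSw_supp[OF y(1)]])
  finally have "(\<Sum>w'\<in>{w'. y w' \<noteq> 0}. y w' * B (mono w') (mono z)) \<noteq> 0" using nz by simp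
  then have "\<exists>w'\<in>{w'. y w' \<noteq> 0}. y w' * B (mono w') (mono z) \<noteq> 0"
    by (meson sum.neutral)
  then obtain w' where w'0: "y w' * B (mono w') (mono z) \<noteq> 0" by blast
  have w': "y w' \<noteq> 0" "B (mono w') (mono z) \<noteq> 0" using w'0 by auto
  have "ordw w' \<and> wtw w' = wtw w" by (rule OSw_words[OF y(1) w'(1)])
  then show ?thesis using ORTH_ord[OF bf _ oz w'(2)] by simp
qed

lemma GEN:
  assumes r1: "RW C d \<Phi>a" and r2: "RW C d \<Phi>b"
    and ord: "\<And>x. ordw x \<Longrightarrow> P (wtw x) \<Longrightarrow> \<Phi>a (mono x) = \<Phi>b (mono x)"
    and u: "supp_fin u" "\<And>w. u w \<noteq> 0 \<Longrightarrow> P (wtw w)"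
  shows "\<Phi>a u = \<Phi>b u"
proof -
  have mono_eq: "\<Phi>a (mono w) = \<Phi>b (mono w)" if "P (wtw w)" for w
  proof -
    obtain y where y: "OSw (wtw w) y" "\<forall>\<Phi>. RW C d \<Phi> \<longrightarrow> \<Phi> (mono w) = \<Phi> y"
      using straighten by blast
    have "\<Phi>a (mono w) = \<Phi>a y" using y(2) r1 by blast
    also have "\<dots> = (\<Sum>w'\<in>{w'. y w' \<noteq> 0}. y w' * \<Phi>a (mono w'))"
      by (rule lin_expand[OF RW_lin[OF r1] OSw_supp[OF y(1)]])
    also have "\<dots> = (\<Sum>w'\<in>{w'. y w' \<noteq> 0}. y w' * \<Phi>b (mono w'))"
    proof (rule sum.cong[OF refl])
      fix w' assume "w' \<in> {w'. y w' \<noteq> 0}"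
      then have "ordw w' \<and> wtw w' = wtw w" using OSw_words[OF y(1)] by blast
      then show "y w' * \<Phi>a (mono w') = y w' * \<Phi>b (mono w')" using ord that by simp
    qed
    also have "\<dots> = \<Phi>b y"
      by (rule lin_expand[OF RW_lin[OF r2] OSw_supp[OF y(1)], symmetric])
    also have "\<dots> = \<Phi>b (mono w)" using y(2) r2 by metis
    finally show ?thesis .
  qed
  have "\<Phi>a u = (\<Sum>w\<in>{w. u w \<noteq> 0}. u w * \<Phi>a (mono w))" by (rule lin_expand[OF RW_lin[OF r1] u(1)])
  also have "\<dots> = (\<Sum>w\<in>{w. u w \<noteq> 0}. u w * \<Phi>b (mono w))"
    by (rule sum.cong[OF refl]) (simp add: mono_eq u(2))
  also have "\<dots> = \<Phi>b u" by (rule lin_expand[OF RW_lin[OF r2] u(1), symmetric])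
  finally show ?thesis .
qed

theorem corollary6p5:
  fixes C :: "'i::finite \<Rightarrow> 'i \<Rightarrow> int" and d :: "'i \<Rightarrow> nat"
    and B :: "(('i \<times> int) list \<Rightarrow> K) \<Rightarrow> (('i \<times> int) list \<Rightarrow> K) \<Rightarrow> K"
    and i :: 'i and k :: int and \<beta> :: "'i \<Rightarrow> int" and u :: "('i \<times> int) list \<Rightarrow> K"
  assumes "finite_cartan C d"
    and "bosonic_form C d B"
    and "homog \<beta> u"
  shows "is_Eprime B i k u
           (smul (qi d i (sgn_pow k * hpair C i \<beta> + 1)) (fmult u (gen (i, k + 1))))
       \<and> is_Estar B i k u
           (smul (qi d i (sgn_pow k * hpair C i \<beta> + 1)) (fmult (gen (i, k - 1)) u))"
proof -
  note fc = assms(1) and bf = assms(2)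
  have cii: "C i i = 2" and dpos: "\<forall>j. d j > 0"
    using fc unfolding finite_cartan_def by auto
  have su: "supp_fin u" and wu: "\<And>w. u w \<noteq> 0 \<Longrightarrow> wtw w = \<beta>"
    using assms(3) unfolding homog_def by auto
  define c where "c = qi d i (sgn_pow k * hpair C i \<beta> + 1)"
  have E1: "is_Eprime B i k u (smul c (fmult u (gen (i, k + 1))))"
    unfolding is_Eprime_def
  proof (intro conjI allI impI)
    show "supp_fin (smul c (fmult u (gen (i, k + 1))))" using su by simp
    fix v :: "('i \<times> int) list \<Rightarrow> K" assume v: "supp_fin v"
    have "B (smul c (fmult u (gen (i, k + 1)))) v = c * B (fmult u (mono [(i, k + 1)])) v"
      using su v by (simp add: bf_smul_left[OF bf] gen_mono)
    also have "\<dots> = B u (fmult (mono [(i, k)]) v)"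
    proof (rule GEN[where \<Phi>a = "\<lambda>y. c * B (fmult y (mono [(i, k + 1)])) v"
                     and \<Phi>b = "\<lambda>y. B y (fmult (mono [(i, k)]) v)" and P = "\<lambda>\<beta>'. \<beta>' = \<beta>"])
      show "RW C d (\<lambda>y. c * B (fmult y (mono [(i, k + 1)])) v)"
        by (intro RW_scale RW_comp_right RW_B_left[OF bf v])
      show "RW C d (\<lambda>y. B y (fmult (mono [(i, k)]) v))"
        by (rule RW_B_left[OF bf]) (simp add: v)
      show "supp_fin u" by (rule su)
      show "\<And>w. u w \<noteq> 0 \<Longrightarrow> wtw w = \<beta>" by (rule wu)
      fix x :: "('i \<times> int) list" assume ox: "ordw x" and wx: "wtw x = \<beta>"
      have "c * B (mono (x @ [(i, k + 1)])) v = B (mono x) (fmult (mono [(i, k)]) v)"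
      proof (rule GEN[where \<Phi>a = "\<lambda>y. c * B (mono (x @ [(i, k + 1)])) y"
                       and \<Phi>b = "\<lambda>y. B (mono x) (fmult (mono [(i, k)]) y)" and P = "\<lambda>_. True"])
        show "RW C d (\<lambda>y. c * B (mono (x @ [(i, k + 1)])) y)"
          by (intro RW_scale RW_B_right[OF bf]) simp
        show "RW C d (\<lambda>y. B (mono x) (fmult (mono [(i, k)]) y))"
          by (intro RW_comp_left RW_B_right[OF bf]) simp
        show "supp_fin v" by (rule v)
        fix z :: "('i \<times> int) list" assume oz: "ordw z"
        show "c * B (mono (x @ [(i, k + 1)])) (mono z) = B (mono x) (fmult (mono [(i, k)]) (mono z))"
          using CORE[OF fc bf ox oz, of i k] wx unfolding c_def by (simp add: fmult_mono_mono)
      qed simp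
      then show "c * B (fmult (mono x) (mono [(i, k + 1)])) v = B (mono x) (fmult (mono [(i, k)]) v)"
        by (simp add: fmult_mono_mono)
    qed
    finally show "B (smul c (fmult u (gen (i, k + 1)))) v = B u (fmult (gen (i, k)) v)"
      by (simp add: gen_mono)
  qed
  have E2: "is_Estar B i k u (smul c (fmult (gen (i, k - 1)) u))"
    unfolding is_Estar_def
  proof (intro conjI allI impI)
    show "supp_fin (smul c (fmult (gen (i, k - 1)) u))" using su by simp
    fix v :: "('i \<times> int) list \<Rightarrow> K" assume v: "supp_fin v"
    have "B (smul c (fmult (gen (i, k - 1)) u)) v = c * B (fmult (mono [(i, k - 1)]) u) v"
      using su v by (simp add: bf_smul_left[OF bf] gen_mono)
    also have "\<dots> = B u (fmult v (mono [(i, k)]))"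
    proof (rule GEN[where \<Phi>a = "\<lambda>y. c * B (fmult (mono [(i, k - 1)]) y) v"
                     and \<Phi>b = "\<lambda>y. B y (fmult v (mono [(i, k)]))" and P = "\<lambda>\<beta>'. \<beta>' = \<beta>"])
      show "RW C d (\<lambda>y. c * B (fmult (mono [(i, k - 1)]) y) v)"
        by (intro RW_scale RW_comp_left RW_B_left[OF bf v])
      show "RW C d (\<lambda>y. B y (fmult v (mono [(i, k)])))"
        by (rule RW_B_left[OF bf]) (simp add: v)
      show "supp_fin u" by (rule su)
      show "\<And>w. u w \<noteq> 0 \<Longrightarrow> wtw w = \<beta>" by (rule wu)
      fix x :: "('i \<times> int) list" assume ox: "ordw x" and wx: "wtw x = \<beta>"
      have "c * B (mono ((i, k - 1) # x)) v = B (mono x) (fmult v (mono [(i, k)]))"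
      proof (rule GEN[where \<Phi>a = "\<lambda>y. c * B (mono ((i, k - 1) # x)) y"
                       and \<Phi>b = "\<lambda>y. B (mono x) (fmult y (mono [(i, k)]))" and P = "\<lambda>_. True"])
        show "RW C d (\<lambda>y. c * B (mono ((i, k - 1) # x)) y)"
          by (intro RW_scale RW_B_right[OF bf]) simp
        show "RW C d (\<lambda>y. B (mono x) (fmult y (mono [(i, k)])))"
          by (intro RW_comp_right RW_B_right[OF bf]) simp
        show "supp_fin v" by (rule v)
        fix z :: "('i \<times> int) list" assume oz: "ordw z"
        define c' where "c' = qi d i (sgn_pow (k - 1) * hpair C i (wtw z) + 1)"
        define W where "W = B (mono ((i, k - 1) # x)) (mono z)"
        have core: "c' * B (mono (z @ [(i, k)])) (mono x) = W"
          using CORE[OF fc bf oz ox, of i "k - 1"] bf_sym[OF bf, of "mono z" "mono ((i, k - 1) # x)"]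
          unfolding c'_def W_def by simp
        have c'nz: "c' \<noteq> 0" unfolding c'_def by (rule qi_nz)
        have rhs: "B (mono x) (mono (z @ [(i, k)])) = W * inverse c'"
          using core c'nz bf_sym[OF bf, of "mono x" "mono (z @ [(i, k)])"] by (simp add: field_simps)
        have "c * W = W * inverse c'"
        proof (cases "W = 0")
          case True
          then show ?thesis by simp
        next
          case False
          then have "wtw ((i, k - 1) # x) = wtw z" unfolding W_def by (rule ORTH[OF bf oz])
          then have "hpair C i (wtw z) = hw C i ((i, k - 1) # x)" by (metis hpair_wtw)
          also have "\<dots> = sgn_pow k * 2 + hw C i x" by (simp add: hw_def cii)
          also have "hw C i x = hpair C i \<beta>" using wx hpair_wtw[of C i x] by simp
          finally have hz: "hpair C i (wtw z) = sgn_pow k * 2 + hpair C i \<beta>" .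
          have sk: "sgn_pow (k - 1) = - sgn_pow k" unfolding sgn_pow_def by auto
          have "(sgn_pow k * hpair C i \<beta> + 1) + (sgn_pow (k - 1) * hpair C i (wtw z) + 1) = 0"
            unfolding hz sk using sgn_pow_sq[of k] by (simp add: algebra_simps)
          then have "c * c' = 1" unfolding c_def c'_def by (metis qi_add qi_0)
          then have "c = inverse c'" using c'nz by (simp add: field_simps)
          then show ?thesis by simp
        qed
        then show "c * B (mono ((i, k - 1) # x)) (mono z) = B (mono x) (fmult (mono z) (mono [(i, k)]))"
          unfolding W_def[symmetric] fmult_mono_mono rhs .
      qed simp
      then show "c * B (fmult (mono [(i, k - 1)]) (mono x)) v = B (mono x) (fmult v (mono [(i, k)]))"
        by (simp add: fmult_mono_mono)
    qed
    finally show "B (smul c (fmult (gen (i, k - 1)) u)) v = B u (fmult v (gen (i, k)))"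
      by (simp add: gen_mono)
  qed
  show ?thesis using E1 E2 unfolding c_def by blast
qed


end
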